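(* Let $R$ be a commutative ring with unit, let $G$ be a group, let $Z$ be a $G$-set, and let $\mathcal A=\bigoplus_{z\in Z}\mathcal A_z$ be an $R$-linear category with $G$-action $\alpha$ such that for every $g\in G$ and $z\in Z$, $\alpha_g$ restricts to an isomorphism $\alpha_g\colon\mathcal A_z\to\mathcal A_{gz}$. Then there is an equivalence of $R$-linear categories \[\mathcal A\rtimes G\simeq\bigoplus_{[z]\in G\backslash Z}\mathcal A_z\rtimes G_z,\] where $G_z$ denotes the stabilizer of $z$ (and $z$ runs over a set of representatives of the orbits).
   Context: An $R$-linear category is a category enriched over $R$-modules. $\bigoplus_{z}\mathcal A_z$ denotes the coproduct of $R$-linear categories: the disjoint union of the object sets, with zero morphisms between objects of different summands. A $G$-action is given by $R$-linear functors $\alpha_g$ with $\alpha_1=\mathrm{id}$, $\alpha_g\alpha_h=\alpha_{gh}$. The crossed product $\mathcal C\rtimes G$ has the objects of $\mathcal C$, morphisms $A\to B$ finite formal sums $\sum_g f_g g$ with $f_g\in\mathrm{Hom}(\alpha_g(A),B)$, and composition determined by $(fg)\circ(f'g')=(f\circ\alpha_g(f'))gg'$; $\mathcal A_z\rtimes G_z$ uses the restricted action of $G_z$ on $\mathcal A_z$. *)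

theory Defs
  imports "HOL-Algebra.Module" "HOL-Algebra.Group_Action" "HOL-Algebra.FiniteProduct"
begin

text \<open>Composition and identities carry their objects explicitly:
  cmp C A B D g f is g after f for f : A -> B, g : B -> D.\<close>

record ('o, 'r, 'm) lincat =
  ob   :: "'o set"
  homm :: "'o \<Rightarrow> 'o \<Rightarrow> ('r, 'm) module"
  cmp  :: "'o \<Rightarrow> 'o \<Rightarrow> 'o \<Rightarrow> 'm \<Rightarrow> 'm \<Rightarrow> 'm"
  ide  :: "'o \<Rightarrow> 'm"

definition lincat :: "('r, 'x) ring_scheme \<Rightarrow> ('o, 'r, 'm) lincat \<Rightarrow> bool" where
  "lincat R C \<longleftrightarrow> cring R \<and>
    (\<forall>A\<in>ob C. \<forall>B\<in>ob C. module R (homm C A B)) \<and>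
    (\<forall>A\<in>ob C. ide C A \<in> carrier (homm C A A)) \<and>
    (\<forall>A\<in>ob C. \<forall>B\<in>ob C. \<forall>D\<in>ob C. \<forall>f\<in>carrier (homm C A B). \<forall>g\<in>carrier (homm C B D).
        cmp C A B D g f \<in> carrier (homm C A D)) \<and>
    (\<forall>A\<in>ob C. \<forall>B\<in>ob C. \<forall>D\<in>ob C. \<forall>E\<in>ob C.
      \<forall>f\<in>carrier (homm C A B). \<forall>g\<in>carrier (homm C B D). \<forall>h\<in>carrier (homm C D E).
        cmp C A D E h (cmp C A B D g f) = cmp C A B E (cmp C B D E h g) f) \<and>
    (\<forall>A\<in>ob C. \<forall>B\<in>ob C. \<forall>f\<in>carrier (homm C A B).
        cmp C A B B (ide C B) f = f \<and> cmp C A A B f (ide C A) = f) \<and>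
    (\<forall>A\<in>ob C. \<forall>B\<in>ob C. \<forall>D\<in>ob C.
      \<forall>f\<in>carrier (homm C A B). \<forall>f'\<in>carrier (homm C A B).
      \<forall>g\<in>carrier (homm C B D). \<forall>g'\<in>carrier (homm C B D).
        cmp C A B D (add (homm C B D) g g') f = add (homm C A D) (cmp C A B D g f) (cmp C A B D g' f) \<and>
        cmp C A B D g (add (homm C A B) f f') = add (homm C A D) (cmp C A B D g f) (cmp C A B D g f') \<and>
        (\<forall>r\<in>carrier R.
          cmp C A B D (smult (homm C B D) r g) f = smult (homm C A D) r (cmp C A B D g f) \<and>
          cmp C A B D g (smult (homm C A B) r f) = smult (homm C A D) r (cmp C A B D g f)))"

record ('o1, 'm1, 'o2, 'm2) lfunctor =
  fo :: "'o1 \<Rightarrow> 'o2"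
  fm :: "'o1 \<Rightarrow> 'o1 \<Rightarrow> 'm1 \<Rightarrow> 'm2"

definition lin_functor ::
  "('r, 'x) ring_scheme \<Rightarrow> ('o1, 'r, 'm1) lincat \<Rightarrow> ('o2, 'r, 'm2) lincat
     \<Rightarrow> ('o1, 'm1, 'o2, 'm2) lfunctor \<Rightarrow> bool" where
  "lin_functor R C D F \<longleftrightarrow>
    (\<forall>A\<in>ob C. fo F A \<in> ob D) \<and>
    (\<forall>A\<in>ob C. \<forall>B\<in>ob C. \<forall>f\<in>carrier (homm C A B).
        fm F A B f \<in> carrier (homm D (fo F A) (fo F B))) \<and>
    (\<forall>A\<in>ob C. \<forall>B\<in>ob C. \<forall>E\<in>ob C. \<forall>f\<in>carrier (homm C A B). \<forall>g\<in>carrier (homm C B E).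
        fm F A E (cmp C A B E g f) = cmp D (fo F A) (fo F B) (fo F E) (fm F B E g) (fm F A B f)) \<and>
    (\<forall>A\<in>ob C. fm F A A (ide C A) = ide D (fo F A)) \<and>
    (\<forall>A\<in>ob C. \<forall>B\<in>ob C. \<forall>f\<in>carrier (homm C A B). \<forall>f'\<in>carrier (homm C A B).
        fm F A B (add (homm C A B) f f') = add (homm D (fo F A) (fo F B)) (fm F A B f) (fm F A B f') \<and>
        (\<forall>r\<in>carrier R. fm F A B (smult (homm C A B) r f) = smult (homm D (fo F A) (fo F B)) r (fm F A B f)))"

definition fid :: "('o, 'm, 'o, 'm) lfunctor" where
  "fid = \<lparr>fo = (\<lambda>A. A), fm = (\<lambda>A B f. f)\<rparr>"

definition fcomp :: "('o2, 'm2, 'o3, 'm3) lfunctor \<Rightarrow> ('o1, 'm1, 'o2, 'm2) lfunctor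
     \<Rightarrow> ('o1, 'm1, 'o3, 'm3) lfunctor" where
  "fcomp G F = \<lparr>fo = (\<lambda>A. fo G (fo F A)), fm = (\<lambda>A B f. fm G (fo F A) (fo F B) (fm F A B f))\<rparr>"

definition nat_iso ::
  "('o1, 'r, 'm1) lincat \<Rightarrow> ('o2, 'r, 'm2) lincat \<Rightarrow> ('o1, 'm1, 'o2, 'm2) lfunctor
     \<Rightarrow> ('o1, 'm1, 'o2, 'm2) lfunctor \<Rightarrow> ('o1 \<Rightarrow> 'm2) \<Rightarrow> bool" where
  "nat_iso C D F F' \<eta> \<longleftrightarrow>
    (\<forall>A\<in>ob C. \<eta> A \<in> carrier (homm D (fo F A) (fo F' A)) \<and>
       (\<exists>\<theta>\<in>carrier (homm D (fo F' A) (fo F A)).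
          cmp D (fo F A) (fo F' A) (fo F A) \<theta> (\<eta> A) = ide D (fo F A) \<and>
          cmp D (fo F' A) (fo F A) (fo F' A) (\<eta> A) \<theta> = ide D (fo F' A))) \<and>
    (\<forall>A\<in>ob C. \<forall>B\<in>ob C. \<forall>f\<in>carrier (homm C A B).
       cmp D (fo F A) (fo F' A) (fo F' B) (fm F' A B f) (\<eta> A) =
       cmp D (fo F A) (fo F B) (fo F' B) (\<eta> B) (fm F A B f))"

definition lincat_equiv ::
  "('r, 'x) ring_scheme \<Rightarrow> ('o1, 'r, 'm1) lincat \<Rightarrow> ('o2, 'r, 'm2) lincat \<Rightarrow> bool" where
  "lincat_equiv R C D \<longleftrightarrow> lincat R C \<and> lincat R D \<and>
    (\<exists>F G \<eta> \<epsilon>. lin_functor R C D F \<and> lin_functor R D C G \<and>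
       nat_iso C C fid (fcomp G F) \<eta> \<and> nat_iso D D fid (fcomp F G) \<epsilon>)"

definition lin_iso ::
  "('r, 'x) ring_scheme \<Rightarrow> ('o1, 'r, 'm1) lincat \<Rightarrow> ('o2, 'r, 'm2) lincat
     \<Rightarrow> ('o1, 'm1, 'o2, 'm2) lfunctor \<Rightarrow> bool" where
  "lin_iso R C D F \<longleftrightarrow> lin_functor R C D F \<and> bij_betw (fo F) (ob C) (ob D) \<and>
    (\<forall>A\<in>ob C. \<forall>B\<in>ob C. bij_betw (fm F A B) (carrier (homm C A B)) (carrier (homm D (fo F A) (fo F B))))"

definition lincat_action ::
  "('r, 'x) ring_scheme \<Rightarrow> ('g, 'y) monoid_scheme \<Rightarrow> ('o, 'r, 'm) lincat
     \<Rightarrow> ('g \<Rightarrow> ('o, 'm, 'o, 'm) lfunctor) \<Rightarrow> bool" where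
  "lincat_action R G C \<alpha> \<longleftrightarrow>
    (\<forall>g\<in>carrier G. lin_functor R C C (\<alpha> g)) \<and>
    (\<forall>A\<in>ob C. fo (\<alpha> \<one>\<^bsub>G\<^esub>) A = A) \<and>
    (\<forall>A\<in>ob C. \<forall>B\<in>ob C. \<forall>f\<in>carrier (homm C A B). fm (\<alpha> \<one>\<^bsub>G\<^esub>) A B f = f) \<and>
    (\<forall>g\<in>carrier G. \<forall>h\<in>carrier G. \<forall>A\<in>ob C. fo (\<alpha> (g \<otimes>\<^bsub>G\<^esub> h)) A = fo (\<alpha> g) (fo (\<alpha> h) A)) \<and>
    (\<forall>g\<in>carrier G. \<forall>h\<in>carrier G. \<forall>A\<in>ob C. \<forall>B\<in>ob C. \<forall>f\<in>carrier (homm C A B).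
        fm (\<alpha> (g \<otimes>\<^bsub>G\<^esub> h)) A B f = fm (\<alpha> g) (fo (\<alpha> h) A) (fo (\<alpha> h) B) (fm (\<alpha> h) A B f))"

text \<open>A morphism A -> B is a finitely supported function f on H with
  f g \<in> Hom(\<alpha>_g A, B), representing the formal sum \<Sum> f_g g; values outside H are undefined.\<close>

definition cross_hom ::
  "('g, 'y) monoid_scheme \<Rightarrow> 'g set \<Rightarrow> ('o, 'r, 'm) lincat \<Rightarrow> ('g \<Rightarrow> ('o, 'm, 'o, 'm) lfunctor)
     \<Rightarrow> 'o \<Rightarrow> 'o \<Rightarrow> ('r, 'g \<Rightarrow> 'm) module" where
  "cross_hom G H C \<alpha> A B =
    \<lparr>carrier = {f. (\<forall>g\<in>H. f g \<in> carrier (homm C (fo (\<alpha> g) A) B)) \<and>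
                  (\<forall>g. g \<notin> H \<longrightarrow> f g = undefined) \<and>
                  finite {g\<in>H. f g \<noteq> zero (homm C (fo (\<alpha> g) A) B)}},
     mult = (\<lambda>_ _. undefined), one = undefined,
     zero = (\<lambda>g. if g \<in> H then zero (homm C (fo (\<alpha> g) A) B) else undefined),
     add = (\<lambda>f f' g. if g \<in> H then add (homm C (fo (\<alpha> g) A) B) (f g) (f' g) else undefined),
     smult = (\<lambda>r f g. if g \<in> H then smult (homm C (fo (\<alpha> g) A) B) r (f g) else undefined)\<rparr>"

definition cross ::
  "('g, 'y) monoid_scheme \<Rightarrow> 'g set \<Rightarrow> ('o, 'r, 'm) lincat \<Rightarrow> ('g \<Rightarrow> ('o, 'm, 'o, 'm) lfunctor)
     \<Rightarrow> ('o, 'r, 'g \<Rightarrow> 'm) lincat" where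
  "cross G H C \<alpha> =
    \<lparr>ob = ob C,
     homm = cross_hom G H C \<alpha>,
     cmp = (\<lambda>A B D f' f k. if k \<in> H then
              finsum (homm C (fo (\<alpha> k) A) D)
                (\<lambda>g. cmp C (fo (\<alpha> k) A) (fo (\<alpha> g) B) D (f' g)
                        (fm (\<alpha> g) (fo (\<alpha> (inv\<^bsub>G\<^esub> g \<otimes>\<^bsub>G\<^esub> k)) A) B (f (inv\<^bsub>G\<^esub> g \<otimes>\<^bsub>G\<^esub> k))))
                {g\<in>H. f' g \<noteq> zero (homm C (fo (\<alpha> g) B) D)}
            else undefined),
     ide = (\<lambda>A g. if g = \<one>\<^bsub>G\<^esub> then ide C A
                  else if g \<in> H then zero (homm C (fo (\<alpha> g) A) A) else undefined)\<rparr>"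

definition zmod :: "('r, 'm) module" where
  "zmod = \<lparr>carrier = {undefined}, mult = (\<lambda>_ _. undefined), one = undefined,
           zero = undefined, add = (\<lambda>_ _. undefined), smult = (\<lambda>_ _. undefined)\<rparr>"

definition coprod :: "'i set \<Rightarrow> ('i \<Rightarrow> ('o, 'r, 'm) lincat) \<Rightarrow> ('i \<times> 'o, 'r, 'm) lincat" where
  "coprod I Cf =
    \<lparr>ob = Sigma I (\<lambda>i. ob (Cf i)),
     homm = (\<lambda>(i, a) (j, b). if i = j then homm (Cf i) a b else zmod),
     cmp = (\<lambda>(i, a) (j, b) (k, c) g f.
              if i = j \<and> j = k then cmp (Cf i) a b c g f
              else if i = k then zero (homm (Cf i) a c) else undefined),
     ide = (\<lambda>(i, a). ide (Cf i) a)\<rparr>"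

definition restr :: "('g \<Rightarrow> ('z \<times> 'o, 'm, 'z \<times> 'o, 'm) lfunctor) \<Rightarrow> 'z \<Rightarrow> 'g \<Rightarrow> ('o, 'm, 'o, 'm) lfunctor" where
  "restr \<alpha> z g = \<lparr>fo = (\<lambda>a. snd (fo (\<alpha> g) (z, a))), fm = (\<lambda>a b f. fm (\<alpha> g) (z, a) (z, b) f)\<rparr>"

end

theory Submission
  imports Defs
begin
context abelian_group begin
lemma idem_zero: "x \<in> carrier G \<Longrightarrow> x \<oplus> x = x \<Longrightarrow> x = \<zero>"
  using add.l_cancel_one by blast
lemma a_inv_zero: "\<ominus> \<zero> = \<zero>"
  by (rule minus_equality) simp_all
end

context abelian_monoid begin

lemma finsum_mono_neutral_left:
  "finite B \<Longrightarrow> A \<subseteq> B \<Longrightarrow> (\<And>i. i \<in> B - A \<Longrightarrow> h i = \<zero>) \<Longrightarrow> (\<And>x. x \<in> A \<Longrightarrow> g x = h x)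
   \<Longrightarrow> h \<in> B \<rightarrow> carrier G \<Longrightarrow> finsum G g A = finsum G h B"
  by (rule add.finprod_mono_neutral_cong_left)

lemma finsum_all_zero: "(\<And>i. i \<in> A \<Longrightarrow> f i = \<zero>) \<Longrightarrow> finsum G f A = \<zero>"
  by (rule add.finprod_one_eqI)

lemma finsum_single_nz:
  assumes "finite A" "f \<in> A \<rightarrow> carrier G" "\<And>j. j \<in> A \<Longrightarrow> j \<noteq> i \<Longrightarrow> f j = \<zero>"
  shows "finsum G f A = (if i \<in> A then f i else \<zero>)"
proof (cases "i \<in> A")
  case True
  have "finsum G f {i} = finsum G f A"
    by (rule finsum_mono_neutral_left) (use assms True in auto)
  moreover have "finsum G f {i} = f i"
    using assms True by (simp add: finsum_insert[of "{}" i f, simplified] Pi_def)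
  ultimately show ?thesis using True by simp
next
  case False
  then show ?thesis using assms by (auto intro: finsum_all_zero)
qed

lemma finsum_single: "x \<in> carrier G \<Longrightarrow> finsum G (\<lambda>i. x) {i} = x"
  by (simp add: finsum_insert[of "{}" i "\<lambda>i. x", simplified])

lemma finsum_swap:
  assumes "finite A" "finite B" "\<And>i j. i \<in> A \<Longrightarrow> j \<in> B \<Longrightarrow> f i j \<in> carrier G"
  shows "finsum G (\<lambda>i. finsum G (\<lambda>j. f i j) B) A = finsum G (\<lambda>j. finsum G (\<lambda>i. f i j) A) B"
  using assms
proof (induction A rule: finite_induct)
  case empty
  then show ?case by (simp add: finsum_all_zero)
next
  case (insert a A)
  have c1: "(\<lambda>i. finsum G (f i) B) \<in> A \<rightarrow> carrier G" using insert by (auto intro!: finsum_closed)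
  have c2: "(\<lambda>j. finsum G (\<lambda>i. f i j) A) \<in> B \<rightarrow> carrier G" using insert by (auto intro!: finsum_closed)
  have "finsum G (\<lambda>i. finsum G (\<lambda>j. f i j) B) (insert a A) = finsum G (f a) B \<oplus> finsum G (\<lambda>i. finsum G (\<lambda>j. f i j) B) A"
    using insert c1 by (subst finsum_insert) (auto intro!: finsum_closed)
  also have "\<dots> = finsum G (f a) B \<oplus> finsum G (\<lambda>j. finsum G (\<lambda>i. f i j) A) B"
    using insert by simp
  also have "\<dots> = finsum G (\<lambda>j. f a j \<oplus> finsum G (\<lambda>i. f i j) A) B"
    using insert c2 by (subst finsum_addf) auto
  also have "\<dots> = finsum G (\<lambda>j. finsum G (\<lambda>i. f i j) (insert a A)) B"
    using insert by (intro finsum_cong') (auto intro!: finsum_closed simp: finsum_insert)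
  finally show ?case .
qed

end

lemma finsum_map:
  assumes M: "abelian_monoid M" and N: "abelian_monoid N" and "finite S" and f: "f \<in> S \<rightarrow> carrier M"
    and add: "\<And>x y. x \<in> carrier M \<Longrightarrow> y \<in> carrier M \<Longrightarrow> h (x \<oplus>\<^bsub>M\<^esub> y) = h x \<oplus>\<^bsub>N\<^esub> h y"
    and z: "h \<zero>\<^bsub>M\<^esub> = \<zero>\<^bsub>N\<^esub>" and cl: "\<And>x. x \<in> carrier M \<Longrightarrow> h x \<in> carrier N"
  shows "h (finsum M f S) = finsum N (\<lambda>i. h (f i)) S"
  using \<open>finite S\<close> f
proof (induction S rule: finite_induct)
  case empty
  show ?case by (simp add: abelian_monoid.finsum_empty[OF M] abelian_monoid.finsum_empty[OF N] z)
next
  case (insert a S)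
  then have fa: "f a \<in> carrier M" and fS: "f \<in> S \<rightarrow> carrier M" by auto
  have "h (finsum M f (insert a S)) = h (f a \<oplus>\<^bsub>M\<^esub> finsum M f S)"
    using abelian_monoid.finsum_insert[OF M insert(1,2) fS fa] by simp
  also have "\<dots> = h (f a) \<oplus>\<^bsub>N\<^esub> h (finsum M f S)"
    using add fa abelian_monoid.finsum_closed[OF M fS] by simp
  also have "\<dots> = h (f a) \<oplus>\<^bsub>N\<^esub> finsum N (\<lambda>i. h (f i)) S" using insert fS by simp
  also have "\<dots> = finsum N (\<lambda>i. h (f i)) (insert a S)"
    using abelian_monoid.finsum_insert[OF N insert(1,2), of "\<lambda>i. h (f i)"] fS fa cl by (auto simp: Pi_def)
  finally show ?case .
qed

lemma lincatD1: "lincat R C \<Longrightarrow> cring R"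
  unfolding lincat_def by (elim conjE) assumption
lemma lincatD2: "lincat R C \<Longrightarrow> \<forall>A\<in>ob C. \<forall>B\<in>ob C. module R (homm C A B)"
  unfolding lincat_def by (elim conjE) assumption
lemma lincatD3: "lincat R C \<Longrightarrow> \<forall>A\<in>ob C. ide C A \<in> carrier (homm C A A)"
  unfolding lincat_def by (elim conjE) assumption
lemma lincatD4: "lincat R C \<Longrightarrow> \<forall>A\<in>ob C. \<forall>B\<in>ob C. \<forall>D\<in>ob C. \<forall>f\<in>carrier (homm C A B). \<forall>g\<in>carrier (homm C B D).
        cmp C A B D g f \<in> carrier (homm C A D)"
  unfolding lincat_def by (elim conjE) assumption
lemma lincatD5: "lincat R C \<Longrightarrow> \<forall>A\<in>ob C. \<forall>B\<in>ob C. \<forall>D\<in>ob C. \<forall>E\<in>ob C.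
      \<forall>f\<in>carrier (homm C A B). \<forall>g\<in>carrier (homm C B D). \<forall>h\<in>carrier (homm C D E).
        cmp C A D E h (cmp C A B D g f) = cmp C A B E (cmp C B D E h g) f"
  unfolding lincat_def by (elim conjE) assumption
lemma lincatD6: "lincat R C \<Longrightarrow> \<forall>A\<in>ob C. \<forall>B\<in>ob C. \<forall>f\<in>carrier (homm C A B).
        cmp C A B B (ide C B) f = f \<and> cmp C A A B f (ide C A) = f"
  unfolding lincat_def by (elim conjE) assumption
lemma lincatD7: "lincat R C \<Longrightarrow> \<forall>A\<in>ob C. \<forall>B\<in>ob C. \<forall>D\<in>ob C.
      \<forall>f\<in>carrier (homm C A B). \<forall>f'\<in>carrier (homm C A B).
      \<forall>g\<in>carrier (homm C B D). \<forall>g'\<in>carrier (homm C B D).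
        cmp C A B D (add (homm C B D) g g') f = add (homm C A D) (cmp C A B D g f) (cmp C A B D g' f) \<and>
        cmp C A B D g (add (homm C A B) f f') = add (homm C A D) (cmp C A B D g f) (cmp C A B D g f') \<and>
        (\<forall>r\<in>carrier R.
          cmp C A B D (smult (homm C B D) r g) f = smult (homm C A D) r (cmp C A B D g f) \<and>
          cmp C A B D g (smult (homm C A B) r f) = smult (homm C A D) r (cmp C A B D g f))"
  unfolding lincat_def by (elim conjE) assumption

lemma lc_cring: "lincat R C \<Longrightarrow> cring R"
  using lincatD1[of R C] by simp
lemma lc_mod: "lincat R C \<Longrightarrow> A \<in> ob C \<Longrightarrow> B \<in> ob C \<Longrightarrow> module R (homm C A B)"
  using lincatD2[of R C] by simp
lemma lc_ag: "lincat R C \<Longrightarrow> A \<in> ob C \<Longrightarrow> B \<in> ob C \<Longrightarrow> abelian_group (homm C A B)"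
  by (rule module.axioms(2)[OF lc_mod])
lemma lc_am: "lincat R C \<Longrightarrow> A \<in> ob C \<Longrightarrow> B \<in> ob C \<Longrightarrow> abelian_monoid (homm C A B)"
  by (rule abelian_group.axioms(1)[OF lc_ag])
lemma lc_ide: "lincat R C \<Longrightarrow> A \<in> ob C \<Longrightarrow> ide C A \<in> carrier (homm C A A)"
  using lincatD3[of R C] by simp
lemma lc_cmp: "lincat R C \<Longrightarrow> A \<in> ob C \<Longrightarrow> B \<in> ob C \<Longrightarrow> D \<in> ob C \<Longrightarrow> f \<in> carrier (homm C A B)
   \<Longrightarrow> g \<in> carrier (homm C B D) \<Longrightarrow> cmp C A B D g f \<in> carrier (homm C A D)"
  using lincatD4[of R C] by simp
lemma lc_assoc: "lincat R C \<Longrightarrow> A \<in> ob C \<Longrightarrow> B \<in> ob C \<Longrightarrow> D \<in> ob C \<Longrightarrow> E \<in> ob C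
   \<Longrightarrow> f \<in> carrier (homm C A B) \<Longrightarrow> g \<in> carrier (homm C B D) \<Longrightarrow> h \<in> carrier (homm C D E)
   \<Longrightarrow> cmp C A D E h (cmp C A B D g f) = cmp C A B E (cmp C B D E h g) f"
  using lincatD5[of R C] by simp
lemma lc_idl: "lincat R C \<Longrightarrow> A \<in> ob C \<Longrightarrow> B \<in> ob C \<Longrightarrow> f \<in> carrier (homm C A B)
   \<Longrightarrow> cmp C A B B (ide C B) f = f"
  using lincatD6[of R C] by simp
lemma lc_idr: "lincat R C \<Longrightarrow> A \<in> ob C \<Longrightarrow> B \<in> ob C \<Longrightarrow> f \<in> carrier (homm C A B)
   \<Longrightarrow> cmp C A A B f (ide C A) = f"
  using lincatD6[of R C] by simp
lemma lc_addl: "lincat R C \<Longrightarrow> A \<in> ob C \<Longrightarrow> B \<in> ob C \<Longrightarrow> D \<in> ob C \<Longrightarrow> f \<in> carrier (homm C A B)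
   \<Longrightarrow> g \<in> carrier (homm C B D) \<Longrightarrow> g' \<in> carrier (homm C B D)
   \<Longrightarrow> cmp C A B D (add (homm C B D) g g') f = add (homm C A D) (cmp C A B D g f) (cmp C A B D g' f)"
  using lincatD7[of R C] by simp
lemma lc_addr: "lincat R C \<Longrightarrow> A \<in> ob C \<Longrightarrow> B \<in> ob C \<Longrightarrow> D \<in> ob C \<Longrightarrow> f \<in> carrier (homm C A B)
   \<Longrightarrow> f' \<in> carrier (homm C A B) \<Longrightarrow> g \<in> carrier (homm C B D)
   \<Longrightarrow> cmp C A B D g (add (homm C A B) f f') = add (homm C A D) (cmp C A B D g f) (cmp C A B D g f')"
  using lincatD7[of R C] by simp
lemma lc_smultl: "lincat R C \<Longrightarrow> A \<in> ob C \<Longrightarrow> B \<in> ob C \<Longrightarrow> D \<in> ob C \<Longrightarrow> f \<in> carrier (homm C A B)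
   \<Longrightarrow> g \<in> carrier (homm C B D) \<Longrightarrow> r \<in> carrier R
   \<Longrightarrow> cmp C A B D (smult (homm C B D) r g) f = smult (homm C A D) r (cmp C A B D g f)"
  using lincatD7[of R C] by simp
lemma lc_smultr: "lincat R C \<Longrightarrow> A \<in> ob C \<Longrightarrow> B \<in> ob C \<Longrightarrow> D \<in> ob C \<Longrightarrow> f \<in> carrier (homm C A B)
   \<Longrightarrow> g \<in> carrier (homm C B D) \<Longrightarrow> r \<in> carrier R
   \<Longrightarrow> cmp C A B D g (smult (homm C A B) r f) = smult (homm C A D) r (cmp C A B D g f)"
  using lincatD7[of R C] by simp

lemma lc_zero: "lincat R C \<Longrightarrow> A \<in> ob C \<Longrightarrow> B \<in> ob C \<Longrightarrow> zero (homm C A B) \<in> carrier (homm C A B)"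
  by (rule abelian_monoid.zero_closed[OF lc_am])

lemma lc_zerol:
  assumes "lincat R C" "A \<in> ob C" "B \<in> ob C" "D \<in> ob C" "f \<in> carrier (homm C A B)"
  shows "cmp C A B D (zero (homm C B D)) f = zero (homm C A D)"
proof -
  let ?x = "cmp C A B D (zero (homm C B D)) f"
  have z: "zero (homm C B D) \<in> carrier (homm C B D)" by (rule lc_zero[OF assms(1,3,4)])
  have c: "?x \<in> carrier (homm C A D)" by (rule lc_cmp[OF assms(1-5) z])
  have "?x = cmp C A B D (add (homm C B D) (zero (homm C B D)) (zero (homm C B D))) f"
    using abelian_monoid.l_zero[OF lc_am[OF assms(1,3,4)] z] by simp
  also have "\<dots> = add (homm C A D) ?x ?x" by (rule lc_addl[OF assms(1-5) z z])
  finally show ?thesis using abelian_group.idem_zero[OF lc_ag[OF assms(1,2,4)] c] by simp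
qed

lemma lc_zeror:
  assumes "lincat R C" "A \<in> ob C" "B \<in> ob C" "D \<in> ob C" "g \<in> carrier (homm C B D)"
  shows "cmp C A B D g (zero (homm C A B)) = zero (homm C A D)"
proof -
  let ?x = "cmp C A B D g (zero (homm C A B))"
  have z: "zero (homm C A B) \<in> carrier (homm C A B)" by (rule lc_zero[OF assms(1,2,3)])
  have c: "?x \<in> carrier (homm C A D)" by (rule lc_cmp[OF assms(1-4) z assms(5)])
  have "?x = cmp C A B D g (add (homm C A B) (zero (homm C A B)) (zero (homm C A B)))"
    using abelian_monoid.l_zero[OF lc_am[OF assms(1,2,3)] z] by simp
  also have "\<dots> = add (homm C A D) ?x ?x" by (rule lc_addr[OF assms(1-4) z z assms(5)])
  finally show ?thesis using abelian_group.idem_zero[OF lc_ag[OF assms(1,2,4)] c] by simp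
qed

lemma lc_finsuml:
  assumes "lincat R C" "A \<in> ob C" "B \<in> ob C" "D \<in> ob C" "f \<in> carrier (homm C A B)"
    "finite S" "u \<in> S \<rightarrow> carrier (homm C B D)"
  shows "cmp C A B D (finsum (homm C B D) u S) f = finsum (homm C A D) (\<lambda>i. cmp C A B D (u i) f) S"
  by (rule finsum_map[OF lc_am[OF assms(1,3,4)] lc_am[OF assms(1,2,4)] assms(6,7)])
     (use assms in \<open>auto intro: lc_addl lc_zerol lc_cmp\<close>)

lemma lc_finsumr:
  assumes "lincat R C" "A \<in> ob C" "B \<in> ob C" "D \<in> ob C" "g \<in> carrier (homm C B D)"
    "finite S" "u \<in> S \<rightarrow> carrier (homm C A B)"
  shows "cmp C A B D g (finsum (homm C A B) u S) = finsum (homm C A D) (\<lambda>i. cmp C A B D g (u i)) S"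
  by (rule finsum_map[OF lc_am[OF assms(1,2,3)] lc_am[OF assms(1,2,4)] assms(6,7)])
     (use assms in \<open>auto intro: lc_addr lc_zeror lc_cmp\<close>)

lemma lfD1: "lin_functor R C D F \<Longrightarrow> \<forall>A\<in>ob C. fo F A \<in> ob D"
  unfolding lin_functor_def by (elim conjE) assumption
lemma lfD2: "lin_functor R C D F \<Longrightarrow> \<forall>A\<in>ob C. \<forall>B\<in>ob C. \<forall>f\<in>carrier (homm C A B).
        fm F A B f \<in> carrier (homm D (fo F A) (fo F B))"
  unfolding lin_functor_def by (elim conjE) assumption
lemma lfD3: "lin_functor R C D F \<Longrightarrow> \<forall>A\<in>ob C. \<forall>B\<in>ob C. \<forall>E\<in>ob C. \<forall>f\<in>carrier (homm C A B). \<forall>g\<in>carrier (homm C B E).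
        fm F A E (cmp C A B E g f) = cmp D (fo F A) (fo F B) (fo F E) (fm F B E g) (fm F A B f)"
  unfolding lin_functor_def by (elim conjE) assumption
lemma lfD4: "lin_functor R C D F \<Longrightarrow> \<forall>A\<in>ob C. fm F A A (ide C A) = ide D (fo F A)"
  unfolding lin_functor_def by (elim conjE) assumption
lemma lfD5: "lin_functor R C D F \<Longrightarrow> \<forall>A\<in>ob C. \<forall>B\<in>ob C. \<forall>f\<in>carrier (homm C A B). \<forall>f'\<in>carrier (homm C A B).
        fm F A B (add (homm C A B) f f') = add (homm D (fo F A) (fo F B)) (fm F A B f) (fm F A B f') \<and>
        (\<forall>r\<in>carrier R. fm F A B (smult (homm C A B) r f) = smult (homm D (fo F A) (fo F B)) r (fm F A B f))"
  unfolding lin_functor_def by (elim conjE) assumption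

lemma lf_ob: "lin_functor R C D F \<Longrightarrow> A \<in> ob C \<Longrightarrow> fo F A \<in> ob D"
  using lfD1[of R C D F] by simp
lemma lf_hom: "lin_functor R C D F \<Longrightarrow> A \<in> ob C \<Longrightarrow> B \<in> ob C \<Longrightarrow> f \<in> carrier (homm C A B)
   \<Longrightarrow> fm F A B f \<in> carrier (homm D (fo F A) (fo F B))"
  using lfD2[of R C D F] by simp
lemma lf_cmp: "lin_functor R C D F \<Longrightarrow> A \<in> ob C \<Longrightarrow> B \<in> ob C \<Longrightarrow> E \<in> ob C
   \<Longrightarrow> f \<in> carrier (homm C A B) \<Longrightarrow> g \<in> carrier (homm C B E)
   \<Longrightarrow> fm F A E (cmp C A B E g f) = cmp D (fo F A) (fo F B) (fo F E) (fm F B E g) (fm F A B f)"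
  using lfD3[of R C D F] by simp
lemma lf_ide: "lin_functor R C D F \<Longrightarrow> A \<in> ob C \<Longrightarrow> fm F A A (ide C A) = ide D (fo F A)"
  using lfD4[of R C D F] by simp
lemma lf_add: "lin_functor R C D F \<Longrightarrow> A \<in> ob C \<Longrightarrow> B \<in> ob C \<Longrightarrow> f \<in> carrier (homm C A B)
   \<Longrightarrow> f' \<in> carrier (homm C A B)
   \<Longrightarrow> fm F A B (add (homm C A B) f f') = add (homm D (fo F A) (fo F B)) (fm F A B f) (fm F A B f')"
  using lfD5[of R C D F] by simp
lemma lf_smult: "lin_functor R C D F \<Longrightarrow> A \<in> ob C \<Longrightarrow> B \<in> ob C \<Longrightarrow> f \<in> carrier (homm C A B)
   \<Longrightarrow> r \<in> carrier R
   \<Longrightarrow> fm F A B (smult (homm C A B) r f) = smult (homm D (fo F A) (fo F B)) r (fm F A B f)"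
  using lfD5[of R C D F] by simp

lemma lf_zero:
  assumes "lincat R C" "lincat R D" "lin_functor R C D F" "A \<in> ob C" "B \<in> ob C"
  shows "fm F A B (zero (homm C A B)) = zero (homm D (fo F A) (fo F B))"
proof -
  let ?x = "fm F A B (zero (homm C A B))"
  have z: "zero (homm C A B) \<in> carrier (homm C A B)" by (rule lc_zero[OF assms(1,4,5)])
  have c: "?x \<in> carrier (homm D (fo F A) (fo F B))" by (rule lf_hom[OF assms(3-5) z])
  have "?x = fm F A B (add (homm C A B) (zero (homm C A B)) (zero (homm C A B)))"
    using abelian_monoid.l_zero[OF lc_am[OF assms(1,4,5)] z] by simp
  also have "\<dots> = add (homm D (fo F A) (fo F B)) ?x ?x" by (rule lf_add[OF assms(3-5) z z])
  finally show ?thesis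
    using abelian_group.idem_zero[OF lc_ag[OF assms(2) lf_ob[OF assms(3,4)] lf_ob[OF assms(3,5)]] c] by simp
qed

lemma lf_finsum:
  assumes "lincat R C" "lincat R D" "lin_functor R C D F" "A \<in> ob C" "B \<in> ob C"
    "finite S" "u \<in> S \<rightarrow> carrier (homm C A B)"
  shows "fm F A B (finsum (homm C A B) u S) = finsum (homm D (fo F A) (fo F B)) (\<lambda>i. fm F A B (u i)) S"
  by (rule finsum_map[OF lc_am[OF assms(1,4,5)] lc_am[OF assms(2) lf_ob[OF assms(3,4)] lf_ob[OF assms(3,5)]] assms(6,7)])
     (use assms in \<open>auto intro: lf_add lf_zero lf_hom\<close>)

lemma mod_smult_finsum:
  assumes "module R M" "a \<in> carrier R" "finite S" "u \<in> S \<rightarrow> carrier M"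
  shows "smult M a (finsum M u S) = finsum M (\<lambda>i. smult M a (u i)) S"
proof -
  have am: "abelian_monoid M" by (rule abelian_group.axioms(1)[OF module.axioms(2)[OF assms(1)]])
  show ?thesis
    by (rule finsum_map[OF am am assms(3,4)])
       (use assms in \<open>auto simp: module.smult_r_distr module.smult_r_null module.smult_closed\<close>)
qed

section \<open>Crossed products are R-linear categories\<close>

definition xsupp :: "'g set \<Rightarrow> ('o, 'r, 'm) lincat \<Rightarrow> ('g \<Rightarrow> ('o, 'm, 'o, 'm) lfunctor) \<Rightarrow> 'o \<Rightarrow> 'o \<Rightarrow> ('g \<Rightarrow> 'm) \<Rightarrow> 'g set" where
  "xsupp H C \<alpha> A B f = {g\<in>H. f g \<noteq> zero (homm C (fo (\<alpha> g) A) B)}"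

definition xtrm :: "('g, 'y) monoid_scheme \<Rightarrow> ('o, 'r, 'm) lincat \<Rightarrow> ('g \<Rightarrow> ('o, 'm, 'o, 'm) lfunctor)
   \<Rightarrow> 'o \<Rightarrow> 'o \<Rightarrow> 'o \<Rightarrow> ('g \<Rightarrow> 'm) \<Rightarrow> ('g \<Rightarrow> 'm) \<Rightarrow> 'g \<Rightarrow> 'g \<Rightarrow> 'm" where
  "xtrm G C \<alpha> A B D f' f k g = cmp C (fo (\<alpha> k) A) (fo (\<alpha> g) B) D (f' g)
      (fm (\<alpha> g) (fo (\<alpha> (inv\<^bsub>G\<^esub> g \<otimes>\<^bsub>G\<^esub> k)) A) B (f (inv\<^bsub>G\<^esub> g \<otimes>\<^bsub>G\<^esub> k)))"

lemma cross_simps: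
  "ob (cross G H C \<alpha>) = ob C"
  "homm (cross G H C \<alpha>) A B = cross_hom G H C \<alpha> A B"
  "k \<in> H \<Longrightarrow> cmp (cross G H C \<alpha>) A B D f' f k = finsum (homm C (fo (\<alpha> k) A) D) (xtrm G C \<alpha> A B D f' f k) (xsupp H C \<alpha> B D f')"
  "k \<notin> H \<Longrightarrow> cmp (cross G H C \<alpha>) A B D f' f k = undefined"
  "ide (cross G H C \<alpha>) A = (\<lambda>g. if g = \<one>\<^bsub>G\<^esub> then ide C A else if g \<in> H then zero (homm C (fo (\<alpha> g) A) A) else undefined)"
  by (simp_all add: cross_def xsupp_def xtrm_def[abs_def])

lemma cross_hom_simps:
  "f \<in> carrier (cross_hom G H C \<alpha> A B) \<longleftrightarrow> (\<forall>g\<in>H. f g \<in> carrier (homm C (fo (\<alpha> g) A) B)) \<and>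
     (\<forall>g. g \<notin> H \<longrightarrow> f g = undefined) \<and> finite (xsupp H C \<alpha> A B f)"
  "zero (cross_hom G H C \<alpha> A B) = (\<lambda>g. if g \<in> H then zero (homm C (fo (\<alpha> g) A) B) else undefined)"
  "add (cross_hom G H C \<alpha> A B) f f' = (\<lambda>g. if g \<in> H then add (homm C (fo (\<alpha> g) A) B) (f g) (f' g) else undefined)"
  "smult (cross_hom G H C \<alpha> A B) r f = (\<lambda>g. if g \<in> H then smult (homm C (fo (\<alpha> g) A) B) r (f g) else undefined)"
  by (simp_all add: cross_hom_def xsupp_def)

locale xsetup =
  fixes R :: "('r, 'x) ring_scheme" and G :: "('g, 'y) monoid_scheme" and H :: "'g set"
    and C :: "('o, 'r, 'm) lincat" and \<alpha> :: "'g \<Rightarrow> ('o, 'm, 'o, 'm) lfunctor"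
  assumes lc: "lincat R C" and grp: "group G" and sub: "subgroup H G"
    and afun: "\<And>g. g \<in> H \<Longrightarrow> lin_functor R C C (\<alpha> g)"
    and a1o: "\<And>A. A \<in> ob C \<Longrightarrow> fo (\<alpha> \<one>\<^bsub>G\<^esub>) A = A"
    and a1m: "\<And>A B f. A \<in> ob C \<Longrightarrow> B \<in> ob C \<Longrightarrow> f \<in> carrier (homm C A B) \<Longrightarrow> fm (\<alpha> \<one>\<^bsub>G\<^esub>) A B f = f"
    and amo: "\<And>g h A. g \<in> H \<Longrightarrow> h \<in> H \<Longrightarrow> A \<in> ob C \<Longrightarrow> fo (\<alpha> (g \<otimes>\<^bsub>G\<^esub> h)) A = fo (\<alpha> g) (fo (\<alpha> h) A)"
    and amm: "\<And>g h A B f. g \<in> H \<Longrightarrow> h \<in> H \<Longrightarrow> A \<in> ob C \<Longrightarrow> B \<in> ob C \<Longrightarrow> f \<in> carrier (homm C A B) \<Longrightarrow>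
        fm (\<alpha> (g \<otimes>\<^bsub>G\<^esub> h)) A B f = fm (\<alpha> g) (fo (\<alpha> h) A) (fo (\<alpha> h) B) (fm (\<alpha> h) A B f)"
begin

abbreviation "ao g A \<equiv> fo (\<alpha> g) A"
abbreviation "Hm A B \<equiv> homm C A B"
abbreviation "XH A B \<equiv> cross_hom G H C \<alpha> A B"
abbreviation "XC \<equiv> cross G H C \<alpha>"
abbreviation "iv g \<equiv> inv\<^bsub>G\<^esub> g"
abbreviation "mul g h \<equiv> g \<otimes>\<^bsub>G\<^esub> h"
abbreviation "sp A B f \<equiv> xsupp H C \<alpha> A B f"

lemma hG: "g \<in> H \<Longrightarrow> g \<in> carrier G"
  using subgroup.subset[OF sub] by blast
lemma h1: "\<one>\<^bsub>G\<^esub> \<in> H"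
  by (rule subgroup.one_closed[OF sub])
lemma hmul: "g \<in> H \<Longrightarrow> h \<in> H \<Longrightarrow> mul g h \<in> H"
  by (rule subgroup.m_closed[OF sub])
lemma hinv: "g \<in> H \<Longrightarrow> iv g \<in> H"
  by (rule subgroup.m_inv_closed[OF sub])
lemma hinvmul: "g \<in> H \<Longrightarrow> k \<in> H \<Longrightarrow> mul (iv g) k \<in> H"
  by (simp add: hinv hmul)
lemma g_cancel1: assumes "g \<in> H" "k \<in> H" shows "mul g (mul (iv g) k) = k"
proof -
  interpret group G by (rule grp)
  show ?thesis using hG[OF assms(1)] hG[OF assms(2)] by (simp add: m_assoc[symmetric])
qed
lemma g_cancel2: assumes "g \<in> H" "k \<in> H" shows "mul (iv g) (mul g k) = k"
proof -
  interpret group G by (rule grp)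
  show ?thesis using hG[OF assms(1)] hG[OF assms(2)] by (simp add: m_assoc[symmetric])
qed
lemma g_invmul: assumes "g \<in> H" "n \<in> H" "k \<in> H" shows "mul (iv (mul g n)) k = mul (iv n) (mul (iv g) k)"
proof -
  interpret group G by (rule grp)
  show ?thesis using hG[OF assms(1)] hG[OF assms(2)] hG[OF assms(3)] by (simp add: inv_mult_group m_assoc)
qed

lemma aob: "g \<in> H \<Longrightarrow> A \<in> ob C \<Longrightarrow> ao g A \<in> ob C"
  by (rule lf_ob[OF afun])
lemma aok: "g \<in> H \<Longrightarrow> k \<in> H \<Longrightarrow> A \<in> ob C \<Longrightarrow> ao g (ao (mul (iv g) k) A) = ao k A"
  using amo[of g "mul (iv g) k" A] hinvmul g_cancel1 by simp

lemma pm: "g \<in> H \<Longrightarrow> A \<in> ob C \<Longrightarrow> B \<in> ob C \<Longrightarrow> module R (Hm (ao g A) B)"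
  by (rule lc_mod[OF lc aob])
lemma pag: "g \<in> H \<Longrightarrow> A \<in> ob C \<Longrightarrow> B \<in> ob C \<Longrightarrow> abelian_group (Hm (ao g A) B)"
  by (rule lc_ag[OF lc aob])
lemma pam: "g \<in> H \<Longrightarrow> A \<in> ob C \<Longrightarrow> B \<in> ob C \<Longrightarrow> abelian_monoid (Hm (ao g A) B)"
  by (rule lc_am[OF lc aob])

lemma XH_eqI: "(\<And>g. g \<in> H \<Longrightarrow> f g = f' g) \<Longrightarrow> (\<And>g. g \<notin> H \<Longrightarrow> f g = undefined) \<Longrightarrow> (\<And>g. g \<notin> H \<Longrightarrow> f' g = undefined) \<Longrightarrow> f = f'"
  by (rule ext) (case_tac "x \<in> H", simp_all)

lemma XH_in: "f \<in> carrier (XH A B) \<Longrightarrow> g \<in> H \<Longrightarrow> f g \<in> carrier (Hm (ao g A) B)"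
  by (simp add: cross_hom_simps)
lemma XH_out: "f \<in> carrier (XH A B) \<Longrightarrow> g \<notin> H \<Longrightarrow> f g = undefined"
  by (simp add: cross_hom_simps)
lemma XH_fin: "f \<in> carrier (XH A B) \<Longrightarrow> finite (sp A B f)"
  by (simp add: cross_hom_simps)
lemma XH_I: "(\<And>g. g \<in> H \<Longrightarrow> f g \<in> carrier (Hm (ao g A) B)) \<Longrightarrow> (\<And>g. g \<notin> H \<Longrightarrow> f g = undefined)
   \<Longrightarrow> finite (sp A B f) \<Longrightarrow> f \<in> carrier (XH A B)"
  by (simp add: cross_hom_simps)
lemma sp_sub: "sp A B f \<subseteq> H"
  by (auto simp: xsupp_def)
lemma sp_mem: "g \<in> sp A B f \<Longrightarrow> g \<in> H"
  by (simp add: xsupp_def)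
lemma not_sp: "g \<in> H \<Longrightarrow> g \<notin> sp A B f \<Longrightarrow> f g = zero (Hm (ao g A) B)"
  by (auto simp: xsupp_def)
lemma sp_finite_sub: "finite S \<Longrightarrow> (\<And>g. g \<in> H \<Longrightarrow> g \<notin> S \<Longrightarrow> f g = zero (Hm (ao g A) B)) \<Longrightarrow> finite (sp A B f)"
  by (rule finite_subset[of _ S]) (auto simp: xsupp_def)

lemma XH_zero: "A \<in> ob C \<Longrightarrow> B \<in> ob C \<Longrightarrow> zero (XH A B) \<in> carrier (XH A B)"
  by (rule XH_I) (auto simp: cross_hom_simps lc_zero[OF lc aob] intro: sp_finite_sub[of "{}"])

lemma XH_add: assumes "A \<in> ob C" "B \<in> ob C" "f \<in> carrier (XH A B)" "f' \<in> carrier (XH A B)"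
  shows "add (XH A B) f f' \<in> carrier (XH A B)"
proof (rule XH_I)
  show "\<And>g. g \<in> H \<Longrightarrow> add (XH A B) f f' g \<in> carrier (Hm (ao g A) B)"
    using assms by (simp add: cross_hom_simps(3) abelian_monoid.a_closed[OF pam] XH_in)
  show "\<And>g. g \<notin> H \<Longrightarrow> add (XH A B) f f' g = undefined" by (simp add: cross_hom_simps(3))
  show "finite (sp A B (add (XH A B) f f'))"
  proof (rule sp_finite_sub[OF finite_UnI[OF XH_fin[OF assms(3)] XH_fin[OF assms(4)]]])
    fix g assume g: "g \<in> H" "g \<notin> sp A B f \<union> sp A B f'"
    then have "f g = zero (Hm (ao g A) B)" "f' g = zero (Hm (ao g A) B)" using not_sp by auto
    then show "add (XH A B) f f' g = zero (Hm (ao g A) B)"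
      using g assms by (simp add: cross_hom_simps(3) abelian_monoid.l_zero[OF pam] lc_zero[OF lc aob])
  qed
qed

lemma XH_smult: assumes "A \<in> ob C" "B \<in> ob C" "f \<in> carrier (XH A B)" "r \<in> carrier R"
  shows "smult (XH A B) r f \<in> carrier (XH A B)"
proof (rule XH_I)
  show "\<And>g. g \<in> H \<Longrightarrow> smult (XH A B) r f g \<in> carrier (Hm (ao g A) B)"
    using assms by (simp add: cross_hom_simps(4) module.smult_closed[OF pm] XH_in)
  show "\<And>g. g \<notin> H \<Longrightarrow> smult (XH A B) r f g = undefined" by (simp add: cross_hom_simps(4))
  show "finite (sp A B (smult (XH A B) r f))"
  proof (rule sp_finite_sub[OF XH_fin[OF assms(3)]])
    fix g assume g: "g \<in> H" "g \<notin> sp A B f"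
    then have "f g = zero (Hm (ao g A) B)" using not_sp by auto
    then show "smult (XH A B) r f g = zero (Hm (ao g A) B)"
      using g assms by (simp add: cross_hom_simps(4) module.smult_r_null[OF pm])
  qed
qed

lemma XH_module: assumes "A \<in> ob C" "B \<in> ob C" shows "module R (XH A B)"
proof (rule moduleI)
  show "cring R" by (rule lc_cring[OF lc])
  show "abelian_group (XH A B)"
  proof (rule abelian_groupI)
    fix x y z assume x: "x \<in> carrier (XH A B)" and y: "y \<in> carrier (XH A B)" and z: "z \<in> carrier (XH A B)"
    show "add (XH A B) x y \<in> carrier (XH A B)" by (rule XH_add[OF assms x y])
    show "add (XH A B) (add (XH A B) x y) z = add (XH A B) x (add (XH A B) y z)"
      using x y z assms by (intro XH_eqI) (auto simp: cross_hom_simps abelian_monoid.a_assoc[OF pam] XH_in)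
    show "add (XH A B) x y = add (XH A B) y x"
      using x y assms by (intro XH_eqI) (auto simp: cross_hom_simps abelian_monoid.a_comm[OF pam] XH_in)
    show "add (XH A B) (zero (XH A B)) x = x"
      using x assms by (intro XH_eqI) (auto simp: cross_hom_simps abelian_monoid.l_zero[OF pam] XH_in)
    show "\<exists>y\<in>carrier (XH A B). add (XH A B) y x = zero (XH A B)"
    proof (intro bexI)
      let ?y = "\<lambda>g. if g \<in> H then a_inv (Hm (ao g A) B) (x g) else undefined"
      show "add (XH A B) ?y x = zero (XH A B)"
        using x assms by (intro XH_eqI) (auto simp: cross_hom_simps abelian_group.l_neg[OF pag] XH_in)
      show "?y \<in> carrier (XH A B)"
        apply (rule XH_I)
          apply (simp add: abelian_group.a_inv_closed[OF pag] XH_in[OF x] assms)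
         apply simp
        apply (rule sp_finite_sub[of "sp A B x"])
         apply (simp add: XH_fin[OF x])
        apply (simp add: not_sp abelian_group.a_inv_zero[OF pag] assms del: cross_hom_simps)
        done
    qed
  qed (rule XH_zero[OF assms])
next
  fix a x assume a: "a \<in> carrier R" and x: "x \<in> carrier (XH A B)"
  show "smult (XH A B) a x \<in> carrier (XH A B)" by (rule XH_smult[OF assms x a])
next
  fix a b x assume a: "a \<in> carrier R" and b: "b \<in> carrier R" and x: "x \<in> carrier (XH A B)"
  show "smult (XH A B) (add R a b) x = add (XH A B) (smult (XH A B) a x) (smult (XH A B) b x)"
    using x a b assms by (intro XH_eqI) (auto simp: cross_hom_simps module.smult_l_distr[OF pm] XH_in)
next
  fix a x y assume a: "a \<in> carrier R" and x: "x \<in> carrier (XH A B)" and y: "y \<in> carrier (XH A B)"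
  show "smult (XH A B) a (add (XH A B) x y) = add (XH A B) (smult (XH A B) a x) (smult (XH A B) a y)"
    using x y a assms by (intro XH_eqI) (auto simp: cross_hom_simps module.smult_r_distr[OF pm] XH_in)
next
  fix a b x assume a: "a \<in> carrier R" and b: "b \<in> carrier R" and x: "x \<in> carrier (XH A B)"
  show "smult (XH A B) (mult R a b) x = smult (XH A B) a (smult (XH A B) b x)"
    using x a b assms by (intro XH_eqI) (auto simp: cross_hom_simps module.smult_assoc1[OF pm] XH_in)
next
  fix x assume x: "x \<in> carrier (XH A B)"
  show "smult (XH A B) (one R) x = x"
    using x assms by (intro XH_eqI) (auto simp: cross_hom_simps module.smult_one[OF pm] XH_in)
qed

end

context xsetup begin

lemma trm_closed:
  assumes A: "A \<in> ob C" and B: "B \<in> ob C" and D: "D \<in> ob C"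
    and f': "f' \<in> carrier (XH B D)" and f: "f \<in> carrier (XH A B)" and k: "k \<in> H" and g: "g \<in> H"
  shows "xtrm G C \<alpha> A B D f' f k g \<in> carrier (Hm (ao k A) D)"
proof -
  let ?h = "mul (iv g) k"
  have h: "?h \<in> H" by (rule hinvmul[OF g k])
  have 1: "f ?h \<in> carrier (Hm (ao ?h A) B)" by (rule XH_in[OF f h])
  have 2: "fm (\<alpha> g) (ao ?h A) B (f ?h) \<in> carrier (Hm (ao k A) (ao g B))"
    using lf_hom[OF afun[OF g] aob[OF h A] B 1] aok[OF g k A] by simp
  have 3: "f' g \<in> carrier (Hm (ao g B) D)" by (rule XH_in[OF f' g])
  show ?thesis unfolding xtrm_def by (rule lc_cmp[OF lc aob[OF k A] aob[OF g B] D 2 3])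
qed

lemma trm_zero_left:
  assumes A: "A \<in> ob C" and B: "B \<in> ob C" and D: "D \<in> ob C"
    and f: "f \<in> carrier (XH A B)" and k: "k \<in> H" and g: "g \<in> H"
    and z: "f' g = zero (Hm (ao g B) D)"
  shows "xtrm G C \<alpha> A B D f' f k g = zero (Hm (ao k A) D)"
proof -
  let ?h = "mul (iv g) k"
  have h: "?h \<in> H" by (rule hinvmul[OF g k])
  have 1: "f ?h \<in> carrier (Hm (ao ?h A) B)" by (rule XH_in[OF f h])
  have 2: "fm (\<alpha> g) (ao ?h A) B (f ?h) \<in> carrier (Hm (ao k A) (ao g B))"
    using lf_hom[OF afun[OF g] aob[OF h A] B 1] aok[OF g k A] by simp
  show ?thesis unfolding xtrm_def z by (rule lc_zerol[OF lc aob[OF k A] aob[OF g B] D 2])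
qed

lemma trm_zero_right:
  assumes A: "A \<in> ob C" and B: "B \<in> ob C" and D: "D \<in> ob C"
    and f': "f' \<in> carrier (XH B D)" and k: "k \<in> H" and g: "g \<in> H"
    and z: "f (mul (iv g) k) = zero (Hm (ao (mul (iv g) k) A) B)"
  shows "xtrm G C \<alpha> A B D f' f k g = zero (Hm (ao k A) D)"
proof -
  let ?h = "mul (iv g) k"
  have h: "?h \<in> H" by (rule hinvmul[OF g k])
  have 2: "fm (\<alpha> g) (ao ?h A) B (f ?h) = zero (Hm (ao k A) (ao g B))"
    using lf_zero[OF lc lc afun[OF g] aob[OF h A] B] aok[OF g k A] z by simp
  have 3: "f' g \<in> carrier (Hm (ao g B) D)" by (rule XH_in[OF f' g])
  show ?thesis unfolding xtrm_def 2 by (rule lc_zeror[OF lc aob[OF k A] aob[OF g B] D 3])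
qed

lemma cmp_super:
  assumes A: "A \<in> ob C" and B: "B \<in> ob C" and D: "D \<in> ob C"
    and f': "f' \<in> carrier (XH B D)" and f: "f \<in> carrier (XH A B)" and k: "k \<in> H"
    and S: "finite S" "sp B D f' \<subseteq> S" "S \<subseteq> H"
  shows "cmp XC A B D f' f k = finsum (Hm (ao k A) D) (xtrm G C \<alpha> A B D f' f k) S"
  unfolding cross_simps(3)[OF k]
proof (rule abelian_monoid.finsum_mono_neutral_left[OF pam[OF k A D] S(1,2)])
  fix i assume "i \<in> S - sp B D f'"
  then have i: "i \<in> H" "i \<notin> sp B D f'" using S by auto
  show "xtrm G C \<alpha> A B D f' f k i = zero (Hm (ao k A) D)"
    by (rule trm_zero_left[where f'=f', OF A B D f k i(1) not_sp[OF i]])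
next
  show "xtrm G C \<alpha> A B D f' f k \<in> S \<rightarrow> carrier (Hm (ao k A) D)"
    using trm_closed[OF A B D f' f k] S(3) by blast
qed simp

lemma cmp_zero_out:
  assumes A: "A \<in> ob C" and B: "B \<in> ob C" and D: "D \<in> ob C"
    and f': "f' \<in> carrier (XH B D)" and f: "f \<in> carrier (XH A B)" and k: "k \<in> H"
    and nk: "k \<notin> (\<lambda>(a, b). mul a b) ` (sp B D f' \<times> sp A B f)"
  shows "cmp XC A B D f' f k = zero (Hm (ao k A) D)"
  unfolding cross_simps(3)[OF k]
proof (rule abelian_monoid.finsum_all_zero[OF pam[OF k A D]])
  fix g assume g: "g \<in> sp B D f'"
  then have gH: "g \<in> H" by (rule sp_mem)
  have "mul (iv g) k \<notin> sp A B f"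
  proof
    assume "mul (iv g) k \<in> sp A B f"
    then have "mul g (mul (iv g) k) \<in> (\<lambda>(a, b). mul a b) ` (sp B D f' \<times> sp A B f)" using g by force
    then show False using nk g_cancel1[OF gH k] by simp
  qed
  then show "xtrm G C \<alpha> A B D f' f k g = zero (Hm (ao k A) D)"
    using trm_zero_right[OF A B D f' k gH] not_sp[OF hinvmul[OF gH k]] by blast
qed

lemma cmp_sp:
  assumes A: "A \<in> ob C" and B: "B \<in> ob C" and D: "D \<in> ob C"
    and f': "f' \<in> carrier (XH B D)" and f: "f \<in> carrier (XH A B)"
  shows "sp A D (cmp XC A B D f' f) \<subseteq> (\<lambda>(a, b). mul a b) ` (sp B D f' \<times> sp A B f)"
  using cmp_zero_out[OF A B D f' f] by (auto simp: xsupp_def)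

lemma cmp_closed:
  assumes A: "A \<in> ob C" and B: "B \<in> ob C" and D: "D \<in> ob C"
    and f': "f' \<in> carrier (XH B D)" and f: "f \<in> carrier (XH A B)"
  shows "cmp XC A B D f' f \<in> carrier (XH A D)"
proof (rule XH_I)
  fix k assume k: "k \<in> H"
  show "cmp XC A B D f' f k \<in> carrier (Hm (ao k A) D)"
    unfolding cross_simps(3)[OF k]
    by (rule abelian_monoid.finsum_closed[OF pam[OF k A D]]) (rule Pi_I, rule trm_closed[OF A B D f' f k], erule sp_mem)
next
  fix k assume "k \<notin> H" then show "cmp XC A B D f' f k = undefined" by (rule cross_simps(4))
next
  show "finite (sp A D (cmp XC A B D f' f))"
    by (rule finite_subset[OF cmp_sp[OF assms]]) (simp add: XH_fin[OF f] XH_fin[OF f'])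
qed

lemma ide_closed: assumes A: "A \<in> ob C" shows "ide XC A \<in> carrier (XH A A)"
proof (rule XH_I)
  fix g assume g: "g \<in> H"
  show "ide XC A g \<in> carrier (Hm (ao g A) A)"
    using g lc_ide[OF lc A] a1o[OF A] lc_zero[OF lc aob[OF g A] A] by (simp add: cross_simps)
next
  fix g assume "g \<notin> H" then show "ide XC A g = undefined" using h1 by (auto simp: cross_simps)
next
  show "finite (sp A A (ide XC A))"
    by (rule sp_finite_sub[of "{\<one>\<^bsub>G\<^esub>}"]) (auto simp: cross_simps)
qed

lemma ide_at1: "A \<in> ob C \<Longrightarrow> ide XC A \<one>\<^bsub>G\<^esub> = ide C A"
  by (simp add: cross_simps)
lemma ide_atne: "g \<in> H \<Longrightarrow> g \<noteq> \<one>\<^bsub>G\<^esub> \<Longrightarrow> ide XC A g = zero (Hm (ao g A) A)"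
  by (simp add: cross_simps)

lemma cmp_idr:
  assumes A: "A \<in> ob C" and B: "B \<in> ob C" and f: "f \<in> carrier (XH A B)"
  shows "cmp XC A A B f (ide XC A) = f"
proof (rule XH_eqI)
  fix k assume k: "k \<in> H"
  have "cmp XC A A B f (ide XC A) k = finsum (Hm (ao k A) B) (xtrm G C \<alpha> A A B f (ide XC A) k) (sp A B f)"
    by (rule cross_simps(3)[OF k])
  also have "\<dots> = (if k \<in> sp A B f then xtrm G C \<alpha> A A B f (ide XC A) k k else zero (Hm (ao k A) B))"
  proof (rule abelian_monoid.finsum_single_nz[OF pam[OF k A B] XH_fin[OF f]])
    show "xtrm G C \<alpha> A A B f (ide XC A) k \<in> sp A B f \<rightarrow> carrier (Hm (ao k A) B)"
      by (rule Pi_I, rule trm_closed[OF A A B f ide_closed[OF A] k], erule sp_mem)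
    fix j assume j: "j \<in> sp A B f" "j \<noteq> k"
    then have jH: "j \<in> H" using sp_mem by blast
    have "mul (iv j) k \<noteq> \<one>\<^bsub>G\<^esub>"
    proof
      assume "mul (iv j) k = \<one>\<^bsub>G\<^esub>"
      then have "mul j (mul (iv j) k) = mul j \<one>\<^bsub>G\<^esub>" by simp
      then show False using g_cancel1[OF jH k] j(2) hG[OF jH] grp by (simp add: group.is_monoid monoid.r_one)
    qed
    then show "xtrm G C \<alpha> A A B f (ide XC A) k j = zero (Hm (ao k A) B)"
      using trm_zero_right[OF A A B f k jH] ide_atne[OF hinvmul[OF jH k]] by blast
  qed
  also have "\<dots> = f k"
  proof (cases "k \<in> sp A B f")
    case True
    have e: "mul (iv k) k = \<one>\<^bsub>G\<^esub>" using grp hG[OF k] by (simp add: group.l_inv)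
    have "xtrm G C \<alpha> A A B f (ide XC A) k k = cmp C (ao k A) (ao k A) B (f k) (fm (\<alpha> k) A A (ide C A))"
      unfolding xtrm_def e using ide_at1[OF A] a1o[OF A] by simp
    also have "\<dots> = cmp C (ao k A) (ao k A) B (f k) (ide C (ao k A))"
      using lf_ide[OF afun[OF k] A] by simp
    also have "\<dots> = f k" by (rule lc_idr[OF lc aob[OF k A] B XH_in[OF f k]])
    finally show ?thesis using True by simp
  next
    case False then show ?thesis using not_sp[OF k] by simp
  qed
  finally show "cmp XC A A B f (ide XC A) k = f k" .
qed (auto simp: cross_simps XH_out[OF f])

lemma cmp_idl:
  assumes A: "A \<in> ob C" and B: "B \<in> ob C" and f: "f \<in> carrier (XH A B)"
  shows "cmp XC A B B (ide XC B) f = f"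
proof (rule XH_eqI)
  fix k assume k: "k \<in> H"
  have sub1: "sp B B (ide XC B) \<subseteq> {\<one>\<^bsub>G\<^esub>}" by (auto simp: xsupp_def cross_simps)
  have "cmp XC A B B (ide XC B) f k = finsum (Hm (ao k A) B) (xtrm G C \<alpha> A B B (ide XC B) f k) {\<one>\<^bsub>G\<^esub>}"
    by (rule cmp_super[OF A B B ide_closed[OF B] f k]) (use sub1 h1 in auto)
  also have "\<dots> = xtrm G C \<alpha> A B B (ide XC B) f k \<one>\<^bsub>G\<^esub>"
    using abelian_monoid.finsum_single_nz[OF pam[OF k A B], of "{\<one>\<^bsub>G\<^esub>}" _ "\<one>\<^bsub>G\<^esub>"]
      trm_closed[OF A B B ide_closed[OF B] f k h1] by simp
  also have "\<dots> = f k"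
  proof -
    have e: "mul (iv \<one>\<^bsub>G\<^esub>) k = k" using grp hG[OF k] by (simp add: group.is_monoid monoid.inv_one monoid.l_one)
    have "xtrm G C \<alpha> A B B (ide XC B) f k \<one>\<^bsub>G\<^esub> = cmp C (ao k A) B B (ide C B) (f k)"
      unfolding xtrm_def e using ide_at1[OF B] a1o[OF B] a1o[OF aob[OF k A]] a1m[OF aob[OF k A] B XH_in[OF f k]] by simp
    also have "\<dots> = f k" by (rule lc_idl[OF lc aob[OF k A] B XH_in[OF f k]])
    finally show ?thesis .
  qed
  finally show "cmp XC A B B (ide XC B) f k = f k" .
qed (auto simp: cross_simps XH_out[OF f])

end

context xsetup begin

lemma phi_closed:
  assumes A: "A \<in> ob C" and B: "B \<in> ob C" and f: "f \<in> carrier (XH A B)" and k: "k \<in> H" and x: "x \<in> H"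
  shows "fm (\<alpha> x) (ao (mul (iv x) k) A) B (f (mul (iv x) k)) \<in> carrier (Hm (ao k A) (ao x B))"
proof -
  let ?h = "mul (iv x) k"
  have h: "?h \<in> H" by (rule hinvmul[OF x k])
  show ?thesis using lf_hom[OF afun[OF x] aob[OF h A] B XH_in[OF f h]] aok[OF x k A] by simp
qed

lemma trm_unfold: "xtrm G C \<alpha> A B D g f k x = cmp C (ao k A) (ao x B) D (g x) (fm (\<alpha> x) (ao (mul (iv x) k) A) B (f (mul (iv x) k)))"
  by (simp add: xtrm_def)

lemma cmp_addl:
  assumes A: "A \<in> ob C" and B: "B \<in> ob C" and D: "D \<in> ob C" and f: "f \<in> carrier (XH A B)"
    and g: "g \<in> carrier (XH B D)" and g': "g' \<in> carrier (XH B D)"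
  shows "cmp XC A B D (add (XH B D) g g') f = add (XH A D) (cmp XC A B D g f) (cmp XC A B D g' f)"
proof (rule XH_eqI)
  fix k assume k: "k \<in> H"
  let ?S = "sp B D g \<union> sp B D g'"
  have Sf: "finite ?S" using XH_fin[OF g] XH_fin[OF g'] by simp
  have SH: "?S \<subseteq> H" by (auto simp: xsupp_def)
  have Ssup: "sp B D (add (XH B D) g g') \<subseteq> ?S"
  proof
    fix x assume x: "x \<in> sp B D (add (XH B D) g g')"
    then have xH: "x \<in> H" by (rule sp_mem)
    show "x \<in> ?S"
    proof (rule ccontr)
      assume "x \<notin> ?S"
      then have "g x = zero (Hm (ao x B) D)" "g' x = zero (Hm (ao x B) D)" using not_sp[OF xH] by auto
      then have "add (XH B D) g g' x = zero (Hm (ao x B) D)"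
        using xH abelian_monoid.l_zero[OF pam[OF xH B D]] lc_zero[OF lc aob[OF xH B] D] by (simp add: cross_hom_simps(3))
      then show False using x by (simp add: xsupp_def)
    qed
  qed
  have "cmp XC A B D (add (XH B D) g g') f k = finsum (Hm (ao k A) D) (xtrm G C \<alpha> A B D (add (XH B D) g g') f k) ?S"
    by (rule cmp_super[OF A B D XH_add[OF B D g g'] f k Sf Ssup SH])
  also have "\<dots> = finsum (Hm (ao k A) D) (\<lambda>x. add (Hm (ao k A) D) (xtrm G C \<alpha> A B D g f k x) (xtrm G C \<alpha> A B D g' f k x)) ?S"
  proof (rule abelian_monoid.finsum_cong'[OF pam[OF k A D]])
    show "(\<lambda>x. add (Hm (ao k A) D) (xtrm G C \<alpha> A B D g f k x) (xtrm G C \<alpha> A B D g' f k x)) \<in> ?S \<rightarrow> carrier (Hm (ao k A) D)"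
      using SH trm_closed[OF A B D g f k] trm_closed[OF A B D g' f k] abelian_monoid.a_closed[OF pam[OF k A D]] by blast
    fix x assume "x \<in> ?S"
    then have x: "x \<in> H" using SH by blast
    show "xtrm G C \<alpha> A B D (add (XH B D) g g') f k x = add (Hm (ao k A) D) (xtrm G C \<alpha> A B D g f k x) (xtrm G C \<alpha> A B D g' f k x)"
      unfolding trm_unfold using x lc_addl[OF lc aob[OF k A] aob[OF x B] D phi_closed[OF A B f k x] XH_in[OF g x] XH_in[OF g' x]]
      by (simp add: cross_hom_simps(3))
  qed simp
  also have "\<dots> = add (Hm (ao k A) D) (finsum (Hm (ao k A) D) (xtrm G C \<alpha> A B D g f k) ?S) (finsum (Hm (ao k A) D) (xtrm G C \<alpha> A B D g' f k) ?S)"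
    by (rule abelian_monoid.finsum_addf[OF pam[OF k A D]]) (use SH trm_closed[OF A B D g f k] trm_closed[OF A B D g' f k] in blast)+
  also have "\<dots> = add (Hm (ao k A) D) (cmp XC A B D g f k) (cmp XC A B D g' f k)"
    using cmp_super[OF A B D g f k Sf _ SH] cmp_super[OF A B D g' f k Sf _ SH] by simp
  finally show "cmp XC A B D (add (XH B D) g g') f k = add (XH A D) (cmp XC A B D g f) (cmp XC A B D g' f) k"
    using k by (simp add: cross_hom_simps(3))
qed (simp_all add: cross_simps cross_hom_simps(3))

lemma cmp_addr:
  assumes A: "A \<in> ob C" and B: "B \<in> ob C" and D: "D \<in> ob C" and f: "f \<in> carrier (XH A B)"
    and f': "f' \<in> carrier (XH A B)" and g: "g \<in> carrier (XH B D)"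
  shows "cmp XC A B D g (add (XH A B) f f') = add (XH A D) (cmp XC A B D g f) (cmp XC A B D g f')"
proof (rule XH_eqI)
  fix k assume k: "k \<in> H"
  let ?S = "sp B D g"
  have SH: "?S \<subseteq> H" by (auto simp: xsupp_def)
  have "cmp XC A B D g (add (XH A B) f f') k = finsum (Hm (ao k A) D) (\<lambda>x. add (Hm (ao k A) D) (xtrm G C \<alpha> A B D g f k x) (xtrm G C \<alpha> A B D g f' k x)) ?S"
    unfolding cross_simps(3)[OF k]
  proof (rule abelian_monoid.finsum_cong'[OF pam[OF k A D]])
    show "(\<lambda>x. add (Hm (ao k A) D) (xtrm G C \<alpha> A B D g f k x) (xtrm G C \<alpha> A B D g f' k x)) \<in> ?S \<rightarrow> carrier (Hm (ao k A) D)"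
      using SH trm_closed[OF A B D g f k] trm_closed[OF A B D g f' k] abelian_monoid.a_closed[OF pam[OF k A D]] by blast
    fix x assume "x \<in> ?S"
    then have x: "x \<in> H" using SH by blast
    let ?h = "mul (iv x) k"
    have h: "?h \<in> H" by (rule hinvmul[OF x k])
    have "fm (\<alpha> x) (ao ?h A) B (add (XH A B) f f' ?h) = add (Hm (ao k A) (ao x B)) (fm (\<alpha> x) (ao ?h A) B (f ?h)) (fm (\<alpha> x) (ao ?h A) B (f' ?h))"
      using lf_add[OF afun[OF x] aob[OF h A] B XH_in[OF f h] XH_in[OF f' h]] h aok[OF x k A] by (simp add: cross_hom_simps(3))
    then show "xtrm G C \<alpha> A B D g (add (XH A B) f f') k x = add (Hm (ao k A) D) (xtrm G C \<alpha> A B D g f k x) (xtrm G C \<alpha> A B D g f' k x)"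
      unfolding trm_unfold using lc_addr[OF lc aob[OF k A] aob[OF x B] D phi_closed[OF A B f k x] phi_closed[OF A B f' k x] XH_in[OF g x]]
      by simp
  qed simp
  also have "\<dots> = add (Hm (ao k A) D) (cmp XC A B D g f k) (cmp XC A B D g f' k)"
    unfolding cross_simps(3)[OF k]
    by (rule abelian_monoid.finsum_addf[OF pam[OF k A D]]) (use SH trm_closed[OF A B D g f k] trm_closed[OF A B D g f' k] in blast)+
  finally show "cmp XC A B D g (add (XH A B) f f') k = add (XH A D) (cmp XC A B D g f) (cmp XC A B D g f') k"
    using k by (simp add: cross_hom_simps(3))
qed (simp_all add: cross_simps cross_hom_simps(3))

lemma cmp_smultl:
  assumes A: "A \<in> ob C" and B: "B \<in> ob C" and D: "D \<in> ob C" and f: "f \<in> carrier (XH A B)"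
    and g: "g \<in> carrier (XH B D)" and r: "r \<in> carrier R"
  shows "cmp XC A B D (smult (XH B D) r g) f = smult (XH A D) r (cmp XC A B D g f)"
proof (rule XH_eqI)
  fix k assume k: "k \<in> H"
  let ?S = "sp B D g"
  have Sf: "finite ?S" by (rule XH_fin[OF g])
  have SH: "?S \<subseteq> H" by (auto simp: xsupp_def)
  have Ssup: "sp B D (smult (XH B D) r g) \<subseteq> ?S"
  proof
    fix x assume x: "x \<in> sp B D (smult (XH B D) r g)"
    then have xH: "x \<in> H" by (rule sp_mem)
    show "x \<in> ?S"
    proof (rule ccontr)
      assume "x \<notin> ?S"
      then have "g x = zero (Hm (ao x B) D)" using not_sp[OF xH] by auto
      then have "smult (XH B D) r g x = zero (Hm (ao x B) D)"
        using xH r module.smult_r_null[OF pm[OF xH B D]] by (simp add: cross_hom_simps(4))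
      then show False using x by (simp add: xsupp_def)
    qed
  qed
  have "cmp XC A B D (smult (XH B D) r g) f k = finsum (Hm (ao k A) D) (xtrm G C \<alpha> A B D (smult (XH B D) r g) f k) ?S"
    by (rule cmp_super[OF A B D XH_smult[OF B D g r] f k Sf Ssup SH])
  also have "\<dots> = finsum (Hm (ao k A) D) (\<lambda>x. smult (Hm (ao k A) D) r (xtrm G C \<alpha> A B D g f k x)) ?S"
  proof (rule abelian_monoid.finsum_cong'[OF pam[OF k A D]])
    show "(\<lambda>x. smult (Hm (ao k A) D) r (xtrm G C \<alpha> A B D g f k x)) \<in> ?S \<rightarrow> carrier (Hm (ao k A) D)"
      using SH trm_closed[OF A B D g f k] module.smult_closed[OF lc_mod[OF lc aob[OF k A] D] r] by blast
    fix x assume "x \<in> ?S"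
    then have x: "x \<in> H" using SH by blast
    show "xtrm G C \<alpha> A B D (smult (XH B D) r g) f k x = smult (Hm (ao k A) D) r (xtrm G C \<alpha> A B D g f k x)"
      unfolding trm_unfold using x lc_smultl[OF lc aob[OF k A] aob[OF x B] D phi_closed[OF A B f k x] XH_in[OF g x] r]
      by (simp add: cross_hom_simps(4))
  qed simp
  also have "\<dots> = smult (Hm (ao k A) D) r (cmp XC A B D g f k)"
    unfolding cross_simps(3)[OF k]
    by (rule mod_smult_finsum[symmetric, OF lc_mod[OF lc aob[OF k A] D] r Sf]) (use SH trm_closed[OF A B D g f k] in blast)
  finally show "cmp XC A B D (smult (XH B D) r g) f k = smult (XH A D) r (cmp XC A B D g f) k"
    using k by (simp add: cross_hom_simps(4))
qed (simp_all add: cross_simps cross_hom_simps(4))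

lemma cmp_smultr:
  assumes A: "A \<in> ob C" and B: "B \<in> ob C" and D: "D \<in> ob C" and f: "f \<in> carrier (XH A B)"
    and g: "g \<in> carrier (XH B D)" and r: "r \<in> carrier R"
  shows "cmp XC A B D g (smult (XH A B) r f) = smult (XH A D) r (cmp XC A B D g f)"
proof (rule XH_eqI)
  fix k assume k: "k \<in> H"
  let ?S = "sp B D g"
  have Sf: "finite ?S" by (rule XH_fin[OF g])
  have SH: "?S \<subseteq> H" by (auto simp: xsupp_def)
  have "cmp XC A B D g (smult (XH A B) r f) k = finsum (Hm (ao k A) D) (\<lambda>x. smult (Hm (ao k A) D) r (xtrm G C \<alpha> A B D g f k x)) ?S"
    unfolding cross_simps(3)[OF k]
  proof (rule abelian_monoid.finsum_cong'[OF pam[OF k A D]])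
    show "(\<lambda>x. smult (Hm (ao k A) D) r (xtrm G C \<alpha> A B D g f k x)) \<in> ?S \<rightarrow> carrier (Hm (ao k A) D)"
      using SH trm_closed[OF A B D g f k] module.smult_closed[OF lc_mod[OF lc aob[OF k A] D] r] by blast
    fix x assume "x \<in> ?S"
    then have x: "x \<in> H" using SH by blast
    let ?h = "mul (iv x) k"
    have h: "?h \<in> H" by (rule hinvmul[OF x k])
    have "fm (\<alpha> x) (ao ?h A) B (smult (XH A B) r f ?h) = smult (Hm (ao k A) (ao x B)) r (fm (\<alpha> x) (ao ?h A) B (f ?h))"
      using lf_smult[OF afun[OF x] aob[OF h A] B XH_in[OF f h] r] h aok[OF x k A] by (simp add: cross_hom_simps(4))
    then show "xtrm G C \<alpha> A B D g (smult (XH A B) r f) k x = smult (Hm (ao k A) D) r (xtrm G C \<alpha> A B D g f k x)"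
      unfolding trm_unfold using lc_smultr[OF lc aob[OF k A] aob[OF x B] D phi_closed[OF A B f k x] XH_in[OF g x] r]
      by simp
  qed simp
  also have "\<dots> = smult (Hm (ao k A) D) r (cmp XC A B D g f k)"
    unfolding cross_simps(3)[OF k]
    by (rule mod_smult_finsum[symmetric, OF lc_mod[OF lc aob[OF k A] D] r Sf]) (use SH trm_closed[OF A B D g f k] in blast)
  finally show "cmp XC A B D g (smult (XH A B) r f) k = smult (XH A D) r (cmp XC A B D g f) k"
    using k by (simp add: cross_hom_simps(4))
qed (simp_all add: cross_simps cross_hom_simps(4))

end

context xsetup begin

lemma assoc_term:
  assumes A: "A \<in> ob C" and B: "B \<in> ob C" and D: "D \<in> ob C" and E: "E \<in> ob C"
    and f: "f \<in> carrier (XH A B)" and g: "g \<in> carrier (XH B D)" and h: "h \<in> carrier (XH D E)"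
    and k: "k \<in> H" and x: "x \<in> H" and n: "n \<in> H"
  shows "cmp C (ao k A) (ao x D) E (h x) (fm (\<alpha> x) (ao (mul (iv x) k) A) D (xtrm G C \<alpha> A B D g f (mul (iv x) k) n))
    = cmp C (ao k A) (ao (mul x n) B) E (xtrm G C \<alpha> B D E h g (mul x n) x)
        (fm (\<alpha> (mul x n)) (ao (mul (iv (mul x n)) k) A) B (f (mul (iv (mul x n)) k)))"
proof -
  let ?j = "mul (iv x) k"
  let ?xn = "mul x n"
  let ?i = "mul (iv ?xn) k"
  have j: "?j \<in> H" by (rule hinvmul[OF x k])
  have xn: "?xn \<in> H" by (rule hmul[OF x n])
  have i: "?i \<in> H" by (rule hinvmul[OF xn k])
  have ij: "mul (iv n) ?j = ?i" using g_invmul[OF x n k] by simp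
  have psi0: "fm (\<alpha> n) (ao ?i A) B (f ?i) \<in> carrier (Hm (ao ?j A) (ao n B))"
    using phi_closed[OF A B f j n] ij by simp
  have gn: "g n \<in> carrier (Hm (ao n B) D)" by (rule XH_in[OF g n])
  have hx: "h x \<in> carrier (Hm (ao x D) E)" by (rule XH_in[OF h x])
  have o1: "ao x (ao ?j A) = ao k A" by (rule aok[OF x k A])
  have o2: "ao x (ao n B) = ao ?xn B" using amo[OF x n B] by simp
  have o3: "ao n (ao ?i A) = ao ?j A" using aok[OF n j A] ij by simp
  have m1: "fm (\<alpha> x) (ao ?j A) (ao n B) (fm (\<alpha> n) (ao ?i A) B (f ?i)) = fm (\<alpha> ?xn) (ao ?i A) B (f ?i)"
    using amm[OF x n aob[OF i A] B XH_in[OF f i]] o3 by simp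
  have "fm (\<alpha> x) (ao ?j A) D (xtrm G C \<alpha> A B D g f ?j n)
      = fm (\<alpha> x) (ao ?j A) D (cmp C (ao ?j A) (ao n B) D (g n) (fm (\<alpha> n) (ao ?i A) B (f ?i)))"
    unfolding trm_unfold ij ..
  also have "\<dots> = cmp C (ao x (ao ?j A)) (ao x (ao n B)) (ao x D) (fm (\<alpha> x) (ao n B) D (g n))
        (fm (\<alpha> x) (ao ?j A) (ao n B) (fm (\<alpha> n) (ao ?i A) B (f ?i)))"
    by (rule lf_cmp[OF afun[OF x] aob[OF j A] aob[OF n B] D psi0 gn])
  also have "\<dots> = cmp C (ao k A) (ao ?xn B) (ao x D) (fm (\<alpha> x) (ao n B) D (g n)) (fm (\<alpha> ?xn) (ao ?i A) B (f ?i))"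
    unfolding o1 o2 m1 ..
  finally have step1: "fm (\<alpha> x) (ao ?j A) D (xtrm G C \<alpha> A B D g f ?j n)
      = cmp C (ao k A) (ao ?xn B) (ao x D) (fm (\<alpha> x) (ao n B) D (g n)) (fm (\<alpha> ?xn) (ao ?i A) B (f ?i))" .
  have c1: "fm (\<alpha> ?xn) (ao ?i A) B (f ?i) \<in> carrier (Hm (ao k A) (ao ?xn B))"
    by (rule phi_closed[OF A B f k xn])
  have c2: "fm (\<alpha> x) (ao n B) D (g n) \<in> carrier (Hm (ao ?xn B) (ao x D))"
    using lf_hom[OF afun[OF x] aob[OF n B] D gn] o2 by simp
  have "cmp C (ao k A) (ao x D) E (h x) (fm (\<alpha> x) (ao ?j A) D (xtrm G C \<alpha> A B D g f ?j n))
     = cmp C (ao k A) (ao ?xn B) E (cmp C (ao ?xn B) (ao x D) E (h x) (fm (\<alpha> x) (ao n B) D (g n))) (fm (\<alpha> ?xn) (ao ?i A) B (f ?i))"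
    unfolding step1 by (rule lc_assoc[OF lc aob[OF k A] aob[OF xn B] aob[OF x D] E c1 c2 hx])
  also have "cmp C (ao ?xn B) (ao x D) E (h x) (fm (\<alpha> x) (ao n B) D (g n)) = xtrm G C \<alpha> B D E h g ?xn x"
    unfolding trm_unfold g_cancel2[OF x n] ..
  finally show ?thesis .
qed

lemma assoc_inner:
  assumes A: "A \<in> ob C" and B: "B \<in> ob C" and D: "D \<in> ob C" and E: "E \<in> ob C"
    and f: "f \<in> carrier (XH A B)" and g: "g \<in> carrier (XH B D)" and h: "h \<in> carrier (XH D E)"
    and k: "k \<in> H" and x: "x \<in> H"
  shows "xtrm G C \<alpha> A D E h (cmp XC A B D g f) k x
    = finsum (Hm (ao k A) E) (\<lambda>n. cmp C (ao k A) (ao (mul x n) B) E (xtrm G C \<alpha> B D E h g (mul x n) x)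
        (fm (\<alpha> (mul x n)) (ao (mul (iv (mul x n)) k) A) B (f (mul (iv (mul x n)) k)))) (sp B D g)"
proof -
  let ?j = "mul (iv x) k"
  have j: "?j \<in> H" by (rule hinvmul[OF x k])
  have fin: "finite (sp B D g)" by (rule XH_fin[OF g])
  have P1: "xtrm G C \<alpha> A B D g f ?j \<in> sp B D g \<rightarrow> carrier (Hm (ao ?j A) D)"
    by (rule Pi_I, rule trm_closed[OF A B D g f j], erule sp_mem)
  have P2: "(\<lambda>n. fm (\<alpha> x) (ao ?j A) D (xtrm G C \<alpha> A B D g f ?j n)) \<in> sp B D g \<rightarrow> carrier (Hm (ao k A) (ao x D))"
  proof
    fix n assume "n \<in> sp B D g"
    then have n: "n \<in> H" by (rule sp_mem)
    show "fm (\<alpha> x) (ao ?j A) D (xtrm G C \<alpha> A B D g f ?j n) \<in> carrier (Hm (ao k A) (ao x D))"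
      using lf_hom[OF afun[OF x] aob[OF j A] D trm_closed[OF A B D g f j n]] aok[OF x k A] by simp
  qed
  have "xtrm G C \<alpha> A D E h (cmp XC A B D g f) k x
     = cmp C (ao k A) (ao x D) E (h x) (fm (\<alpha> x) (ao ?j A) D (finsum (Hm (ao ?j A) D) (xtrm G C \<alpha> A B D g f ?j) (sp B D g)))"
    unfolding trm_unfold cross_simps(3)[OF j] ..
  also have "fm (\<alpha> x) (ao ?j A) D (finsum (Hm (ao ?j A) D) (xtrm G C \<alpha> A B D g f ?j) (sp B D g))
     = finsum (Hm (ao k A) (ao x D)) (\<lambda>n. fm (\<alpha> x) (ao ?j A) D (xtrm G C \<alpha> A B D g f ?j n)) (sp B D g)"
    using lf_finsum[OF lc lc afun[OF x] aob[OF j A] D fin P1] aok[OF x k A] by simp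
  also have "cmp C (ao k A) (ao x D) E (h x) (finsum (Hm (ao k A) (ao x D)) (\<lambda>n. fm (\<alpha> x) (ao ?j A) D (xtrm G C \<alpha> A B D g f ?j n)) (sp B D g))
     = finsum (Hm (ao k A) E) (\<lambda>n. cmp C (ao k A) (ao x D) E (h x) (fm (\<alpha> x) (ao ?j A) D (xtrm G C \<alpha> A B D g f ?j n))) (sp B D g)"
    by (rule lc_finsumr[OF lc aob[OF k A] aob[OF x D] E XH_in[OF h x] fin P2])
  also have "\<dots> = finsum (Hm (ao k A) E) (\<lambda>n. cmp C (ao k A) (ao (mul x n) B) E (xtrm G C \<alpha> B D E h g (mul x n) x)
        (fm (\<alpha> (mul x n)) (ao (mul (iv (mul x n)) k) A) B (f (mul (iv (mul x n)) k)))) (sp B D g)"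
  proof (rule abelian_monoid.finsum_cong'[OF pam[OF k A E]])
    show "(\<lambda>n. cmp C (ao k A) (ao (mul x n) B) E (xtrm G C \<alpha> B D E h g (mul x n) x)
        (fm (\<alpha> (mul x n)) (ao (mul (iv (mul x n)) k) A) B (f (mul (iv (mul x n)) k)))) \<in> sp B D g \<rightarrow> carrier (Hm (ao k A) E)"
    proof
      fix n assume "n \<in> sp B D g"
      then have n: "n \<in> H" by (rule sp_mem)
      have xn: "mul x n \<in> H" by (rule hmul[OF x n])
      show "cmp C (ao k A) (ao (mul x n) B) E (xtrm G C \<alpha> B D E h g (mul x n) x)
        (fm (\<alpha> (mul x n)) (ao (mul (iv (mul x n)) k) A) B (f (mul (iv (mul x n)) k))) \<in> carrier (Hm (ao k A) E)"
        by (rule lc_cmp[OF lc aob[OF k A] aob[OF xn B] E phi_closed[OF A B f k xn] trm_closed[OF B D E h g xn x]])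
    qed
    fix n assume "n \<in> sp B D g"
    then have n: "n \<in> H" by (rule sp_mem)
    show "cmp C (ao k A) (ao x D) E (h x) (fm (\<alpha> x) (ao ?j A) D (xtrm G C \<alpha> A B D g f ?j n))
      = cmp C (ao k A) (ao (mul x n) B) E (xtrm G C \<alpha> B D E h g (mul x n) x)
        (fm (\<alpha> (mul x n)) (ao (mul (iv (mul x n)) k) A) B (f (mul (iv (mul x n)) k)))"
      by (rule assoc_term[OF A B D E f g h k x n])
  qed simp
  finally show ?thesis .
qed

lemma cmp_assoc:
  assumes A: "A \<in> ob C" and B: "B \<in> ob C" and D: "D \<in> ob C" and E: "E \<in> ob C"
    and f: "f \<in> carrier (XH A B)" and g: "g \<in> carrier (XH B D)" and h: "h \<in> carrier (XH D E)"
  shows "cmp XC A D E h (cmp XC A B D g f) = cmp XC A B E (cmp XC B D E h g) f"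
proof (rule XH_eqI)
  fix k assume k: "k \<in> H"
  let ?M = "(\<lambda>(a, b). mul a b) ` (sp D E h \<times> sp B D g)"
  have Mf: "finite ?M" using XH_fin[OF g] XH_fin[OF h] by simp
  have MH: "?M \<subseteq> H" using hmul by (auto simp: xsupp_def)
  have hg: "cmp XC B D E h g \<in> carrier (XH B E)" by (rule cmp_closed[OF B D E h g])
  have gf: "cmp XC A B D g f \<in> carrier (XH A D)" by (rule cmp_closed[OF A B D g f])
  define U where "U x m = cmp C (ao k A) (ao m B) E (xtrm G C \<alpha> B D E h g m x)
        (fm (\<alpha> m) (ao (mul (iv m) k) A) B (f (mul (iv m) k)))" for x m
  have Ucl: "U x m \<in> carrier (Hm (ao k A) E)" if "x \<in> H" "m \<in> H" for x m
    unfolding U_def by (rule lc_cmp[OF lc aob[OF k A] aob[OF that(2) B] E phi_closed[OF A B f k that(2)] trm_closed[OF B D E h g that(2) that(1)]])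
  have finh: "finite (sp D E h)" by (rule XH_fin[OF h])
  have fing: "finite (sp B D g)" by (rule XH_fin[OF g])
  have "cmp XC A B E (cmp XC B D E h g) f k = finsum (Hm (ao k A) E) (xtrm G C \<alpha> A B E (cmp XC B D E h g) f k) ?M"
    by (rule cmp_super[OF A B E hg f k Mf cmp_sp[OF B D E h g] MH])
  also have "\<dots> = finsum (Hm (ao k A) E) (\<lambda>m. finsum (Hm (ao k A) E) (\<lambda>x. U x m) (sp D E h)) ?M"
  proof (rule abelian_monoid.finsum_cong'[OF pam[OF k A E]])
    show "(\<lambda>m. finsum (Hm (ao k A) E) (\<lambda>x. U x m) (sp D E h)) \<in> ?M \<rightarrow> carrier (Hm (ao k A) E)"
    proof
      fix m assume "m \<in> ?M" then have m: "m \<in> H" using MH by blast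
      show "finsum (Hm (ao k A) E) (\<lambda>x. U x m) (sp D E h) \<in> carrier (Hm (ao k A) E)"
        by (rule abelian_monoid.finsum_closed[OF pam[OF k A E]]) (rule Pi_I, rule Ucl, erule sp_mem, rule m)
    qed
    fix m assume "m \<in> ?M" then have m: "m \<in> H" using MH by blast
    have P: "xtrm G C \<alpha> B D E h g m \<in> sp D E h \<rightarrow> carrier (Hm (ao m B) E)"
      by (rule Pi_I, rule trm_closed[OF B D E h g m], erule sp_mem)
    show "xtrm G C \<alpha> A B E (cmp XC B D E h g) f k m = finsum (Hm (ao k A) E) (\<lambda>x. U x m) (sp D E h)"
      using lc_finsuml[OF lc aob[OF k A] aob[OF m B] E phi_closed[OF A B f k m] finh P]
      by (simp add: U_def trm_unfold[of A B E] cross_simps(3)[OF m])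
  qed simp
  also have "\<dots> = finsum (Hm (ao k A) E) (\<lambda>x. finsum (Hm (ao k A) E) (\<lambda>m. U x m) ?M) (sp D E h)"
    by (rule abelian_monoid.finsum_swap[OF pam[OF k A E] Mf finh, of "\<lambda>m x. U x m"]) (use MH Ucl sp_mem in blast)
  also have "\<dots> = finsum (Hm (ao k A) E) (\<lambda>x. xtrm G C \<alpha> A D E h (cmp XC A B D g f) k x) (sp D E h)"
  proof (rule abelian_monoid.finsum_cong'[OF pam[OF k A E]])
    show "(\<lambda>x. xtrm G C \<alpha> A D E h (cmp XC A B D g f) k x) \<in> sp D E h \<rightarrow> carrier (Hm (ao k A) E)"
      by (rule Pi_I, rule trm_closed[OF A D E h gf k], erule sp_mem)
    fix x assume xs: "x \<in> sp D E h"
    then have x: "x \<in> H" by (rule sp_mem)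
    have sub: "(mul x) ` sp B D g \<subseteq> ?M" using xs by force
    have "finsum (Hm (ao k A) E) (\<lambda>m. U x m) ((mul x) ` sp B D g) = finsum (Hm (ao k A) E) (\<lambda>m. U x m) ?M"
    proof (rule abelian_monoid.finsum_mono_neutral_left[OF pam[OF k A E] Mf sub])
      fix m assume mm: "m \<in> ?M - (mul x) ` sp B D g"
      then have m: "m \<in> H" using MH by blast
      have "mul (iv x) m \<notin> sp B D g"
      proof
        assume "mul (iv x) m \<in> sp B D g"
        then have "mul x (mul (iv x) m) \<in> (mul x) ` sp B D g" by blast
        then show False using mm g_cancel1[OF x m] by simp
      qed
      then have z: "g (mul (iv x) m) = zero (Hm (ao (mul (iv x) m) B) D)" using not_sp[OF hinvmul[OF x m]] by blast
      have "xtrm G C \<alpha> B D E h g m x = zero (Hm (ao m B) E)"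
        by (rule trm_zero_right[where f=g, OF B D E h m x z])
      then show "U x m = zero (Hm (ao k A) E)"
        unfolding U_def by (simp add: lc_zerol[OF lc aob[OF k A] aob[OF m B] E phi_closed[OF A B f k m]])
    next
      show "(\<lambda>m. U x m) \<in> ?M \<rightarrow> carrier (Hm (ao k A) E)" using Ucl x MH by blast
    qed simp
    also have "finsum (Hm (ao k A) E) (\<lambda>m. U x m) ((mul x) ` sp B D g) = finsum (Hm (ao k A) E) (\<lambda>n. U x (mul x n)) (sp B D g)"
    proof (rule abelian_monoid.finsum_reindex[OF pam[OF k A E]])
      show "(\<lambda>m. U x m) \<in> (mul x) ` sp B D g \<rightarrow> carrier (Hm (ao k A) E)"
        using Ucl x hmul sp_mem by blast
      show "inj_on (mul x) (sp B D g)"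
      proof (rule inj_onI)
        fix a b assume "a \<in> sp B D g" "b \<in> sp B D g" "mul x a = mul x b"
        then show "a = b" using g_cancel2[OF x, of a] g_cancel2[OF x, of b] sp_mem by metis
      qed
    qed
    also have "\<dots> = xtrm G C \<alpha> A D E h (cmp XC A B D g f) k x"
      unfolding U_def by (rule assoc_inner[OF A B D E f g h k x, symmetric])
    finally show "finsum (Hm (ao k A) E) (\<lambda>m. U x m) ?M = xtrm G C \<alpha> A D E h (cmp XC A B D g f) k x" by simp
  qed simp
  also have "\<dots> = cmp XC A D E h (cmp XC A B D g f) k"
    by (rule cross_simps(3)[OF k, symmetric])
  finally show "cmp XC A D E h (cmp XC A B D g f) k = cmp XC A B E (cmp XC B D E h g) f k" by simp
qed (simp_all add: cross_simps)

theorem cross_lincat: "lincat R XC"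
  unfolding lincat_def
  apply (intro conjI)
  apply (rule lc_cring[OF lc])
  apply (simp add: cross_simps(1,2) XH_module)
  apply (simp add: cross_simps(1,2) ide_closed)
  apply (simp add: cross_simps(1,2) cmp_closed)
  apply (simp add: cross_simps(1,2) cmp_assoc)
  apply (simp add: cross_simps(1,2) cmp_idl cmp_idr)
  apply (simp add: cross_simps(1,2) cmp_addl cmp_addr cmp_smultl cmp_smultr)
  done

end

section \<open>Coproducts\<close>

lemma zmod_simps: "carrier zmod = {undefined}" "zero zmod = undefined" "add zmod x y = undefined" "smult zmod r x = undefined"
  by (simp_all add: zmod_def)

lemma zmod_module: assumes "cring R" shows "module R zmod"
proof (rule moduleI)
  show "abelian_group zmod"
    by (rule abelian_groupI) (auto simp: zmod_simps)
qed (auto simp: zmod_simps assms)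

lemma coprod_ob: "ob (coprod I Cf) = Sigma I (\<lambda>i. ob (Cf i))"
  by (simp add: coprod_def)
lemma coprod_homm: "homm (coprod I Cf) (i, a) (j, b) = (if i = j then homm (Cf i) a b else zmod)"
  by (simp add: coprod_def)
lemma coprod_cmp: "cmp (coprod I Cf) (i, a) (j, b) (k, c) g f =
   (if i = j \<and> j = k then cmp (Cf i) a b c g f else if i = k then zero (homm (Cf i) a c) else undefined)"
  by (simp add: coprod_def)
lemma coprod_cmp_eq: "cmp (coprod I Cf) (i, a) (i, b) (i, c) g f = cmp (Cf i) a b c g f"
  by (simp add: coprod_def)
lemma coprod_cmp_mid: "j \<noteq> i \<Longrightarrow> cmp (coprod I Cf) (i, a) (j, b) (i, c) g f = zero (homm (Cf i) a c)"
  by (simp add: coprod_def)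
lemma coprod_cmp_ne: "i \<noteq> k \<Longrightarrow> cmp (coprod I Cf) (i, a) (j, b) (k, c) g f = undefined"
  by (auto simp: coprod_def)
lemma coprod_homm_eq: "homm (coprod I Cf) (i, a) (i, b) = homm (Cf i) a b"
  by (simp add: coprod_def)
lemma coprod_homm_ne: "i \<noteq> j \<Longrightarrow> homm (coprod I Cf) (i, a) (j, b) = zmod"
  by (simp add: coprod_def)
lemma coprod_ide: "ide (coprod I Cf) (i, a) = ide (Cf i) a"
  by (simp add: coprod_def)

lemma coprod_lincat:
  assumes R: "cring R" and L: "\<forall>i\<in>I. lincat R (Cf i)"
  shows "lincat R (coprod I Cf)"
  unfolding lincat_def coprod_ob
proof (intro conjI)
  show "cring R" by (rule R)
  show "\<forall>A\<in>Sigma I (\<lambda>i. ob (Cf i)). \<forall>B\<in>Sigma I (\<lambda>i. ob (Cf i)). module R (homm (coprod I Cf) A B)"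
    using L by (auto simp: coprod_homm lc_mod zmod_module[OF R])
  show "\<forall>A\<in>Sigma I (\<lambda>i. ob (Cf i)). ide (coprod I Cf) A \<in> carrier (homm (coprod I Cf) A A)"
    using L by (auto simp: coprod_homm coprod_ide lc_ide)
  show "\<forall>A\<in>Sigma I (\<lambda>i. ob (Cf i)). \<forall>B\<in>Sigma I (\<lambda>i. ob (Cf i)). \<forall>D\<in>Sigma I (\<lambda>i. ob (Cf i)).
     \<forall>f\<in>carrier (homm (coprod I Cf) A B). \<forall>g\<in>carrier (homm (coprod I Cf) B D).
        cmp (coprod I Cf) A B D g f \<in> carrier (homm (coprod I Cf) A D)"
    using L by (auto simp: coprod_homm coprod_cmp lc_cmp lc_zero zmod_simps)
  show "\<forall>A\<in>Sigma I (\<lambda>i. ob (Cf i)). \<forall>B\<in>Sigma I (\<lambda>i. ob (Cf i)). \<forall>D\<in>Sigma I (\<lambda>i. ob (Cf i)). \<forall>E\<in>Sigma I (\<lambda>i. ob (Cf i)).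
      \<forall>f\<in>carrier (homm (coprod I Cf) A B). \<forall>g\<in>carrier (homm (coprod I Cf) B D). \<forall>h\<in>carrier (homm (coprod I Cf) D E).
        cmp (coprod I Cf) A D E h (cmp (coprod I Cf) A B D g f) = cmp (coprod I Cf) A B E (cmp (coprod I Cf) B D E h g) f"
  proof (clarify)
    fix i a j b d x e y f g h
    assume a: "i \<in> I" "a \<in> ob (Cf i)" and b: "j \<in> I" "b \<in> ob (Cf j)" and x: "d \<in> I" "x \<in> ob (Cf d)"
      and y: "e \<in> I" "y \<in> ob (Cf e)"
      and f: "f \<in> carrier (homm (coprod I Cf) (i, a) (j, b))" and g: "g \<in> carrier (homm (coprod I Cf) (j, b) (d, x))"
      and h: "h \<in> carrier (homm (coprod I Cf) (d, x) (e, y))"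
    have Li: "lincat R (Cf i)" using L a by blast
    show "cmp (coprod I Cf) (i, a) (d, x) (e, y) h (cmp (coprod I Cf) (i, a) (j, b) (d, x) g f) =
          cmp (coprod I Cf) (i, a) (j, b) (e, y) (cmp (coprod I Cf) (j, b) (d, x) (e, y) h g) f"
    proof (cases "i = j \<and> j = d \<and> d = e")
      case True
      then have e: "j = i" "d = i" "e = i" by auto
      have f1: "f \<in> carrier (homm (Cf i) a b)" using f unfolding e coprod_homm_eq .
      have g1: "g \<in> carrier (homm (Cf i) b x)" using g unfolding e coprod_homm_eq .
      have h1: "h \<in> carrier (homm (Cf i) x y)" using h unfolding e coprod_homm_eq .
      have o: "b \<in> ob (Cf i)" "x \<in> ob (Cf i)" "y \<in> ob (Cf i)" using b x y unfolding e by simp_all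
      show ?thesis unfolding e coprod_cmp_eq by (rule lc_assoc[OF Li a(2) o f1 g1 h1])
    next
      case False
      show ?thesis
      proof (cases "i = e")
        case False
        then show ?thesis by (simp only: coprod_cmp_ne[OF False])
      next
        case True
        have lhs: "cmp (coprod I Cf) (i, a) (d, x) (e, y) h (cmp (coprod I Cf) (i, a) (j, b) (d, x) g f) = zero (homm (Cf i) a y)"
        proof (cases "d = i")
          case True
          then have ji: "j \<noteq> i" using \<open>i = e\<close> \<open>\<not> (i = j \<and> j = d \<and> d = e)\<close> by auto
          have h1: "h \<in> carrier (homm (Cf i) x y)" using h unfolding True \<open>i = e\<close>[symmetric] coprod_homm_eq .
          have o: "x \<in> ob (Cf i)" "y \<in> ob (Cf i)" using x y True \<open>i = e\<close> by simp_all
          show ?thesis unfolding True \<open>i = e\<close>[symmetric] coprod_cmp_mid[OF ji] coprod_cmp_eq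
            by (rule lc_zeror[OF Li a(2) o h1])
        next
          case False
          then show ?thesis unfolding \<open>i = e\<close>[symmetric] using False
            by (simp only: coprod_cmp_mid[OF False])
        qed
        have rhs: "cmp (coprod I Cf) (i, a) (j, b) (e, y) (cmp (coprod I Cf) (j, b) (d, x) (e, y) h g) f = zero (homm (Cf i) a y)"
        proof (cases "j = i")
          case True
          then have di: "d \<noteq> i" using \<open>i = e\<close> \<open>\<not> (i = j \<and> j = d \<and> d = e)\<close> by auto
          have f1: "f \<in> carrier (homm (Cf i) a b)" using f unfolding True coprod_homm_eq .
          have o: "b \<in> ob (Cf i)" "y \<in> ob (Cf i)" using b y True \<open>i = e\<close> by simp_all
          show ?thesis unfolding True \<open>i = e\<close>[symmetric] coprod_cmp_mid[OF di] coprod_cmp_eq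
            by (rule lc_zerol[OF Li a(2) o f1])
        next
          case False
          then show ?thesis unfolding \<open>i = e\<close>[symmetric]
            by (simp only: coprod_cmp_mid[OF False])
        qed
        show ?thesis using lhs rhs by simp
      qed
    qed
  qed
  show "\<forall>A\<in>Sigma I (\<lambda>i. ob (Cf i)). \<forall>B\<in>Sigma I (\<lambda>i. ob (Cf i)). \<forall>f\<in>carrier (homm (coprod I Cf) A B).
        cmp (coprod I Cf) A B B (ide (coprod I Cf) B) f = f \<and> cmp (coprod I Cf) A A B f (ide (coprod I Cf) A) = f"
    using L by (auto simp: coprod_homm coprod_cmp coprod_ide lc_idl lc_idr zmod_simps)
  show "\<forall>A\<in>Sigma I (\<lambda>i. ob (Cf i)). \<forall>B\<in>Sigma I (\<lambda>i. ob (Cf i)). \<forall>D\<in>Sigma I (\<lambda>i. ob (Cf i)).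
      \<forall>f\<in>carrier (homm (coprod I Cf) A B). \<forall>f'\<in>carrier (homm (coprod I Cf) A B).
      \<forall>g\<in>carrier (homm (coprod I Cf) B D). \<forall>g'\<in>carrier (homm (coprod I Cf) B D).
        cmp (coprod I Cf) A B D (add (homm (coprod I Cf) B D) g g') f = add (homm (coprod I Cf) A D) (cmp (coprod I Cf) A B D g f) (cmp (coprod I Cf) A B D g' f) \<and>
        cmp (coprod I Cf) A B D g (add (homm (coprod I Cf) A B) f f') = add (homm (coprod I Cf) A D) (cmp (coprod I Cf) A B D g f) (cmp (coprod I Cf) A B D g f') \<and>
        (\<forall>r\<in>carrier R.
          cmp (coprod I Cf) A B D (smult (homm (coprod I Cf) B D) r g) f = smult (homm (coprod I Cf) A D) r (cmp (coprod I Cf) A B D g f) \<and>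
          cmp (coprod I Cf) A B D g (smult (homm (coprod I Cf) A B) r f) = smult (homm (coprod I Cf) A D) r (cmp (coprod I Cf) A B D g f))"
  proof (clarify)
    fix i a j b d x f f' g g'
    assume a: "i \<in> I" "a \<in> ob (Cf i)" and b: "j \<in> I" "b \<in> ob (Cf j)" and x: "d \<in> I" "x \<in> ob (Cf d)"
      and f: "f \<in> carrier (homm (coprod I Cf) (i, a) (j, b))" and f': "f' \<in> carrier (homm (coprod I Cf) (i, a) (j, b))"
      and g: "g \<in> carrier (homm (coprod I Cf) (j, b) (d, x))" and g': "g' \<in> carrier (homm (coprod I Cf) (j, b) (d, x))"
    have Li: "lincat R (Cf i)" using L a by blast
    let ?C = "coprod I Cf"
    show "cmp ?C (i, a) (j, b) (d, x) (add (homm ?C (j, b) (d, x)) g g') f = add (homm ?C (i, a) (d, x)) (cmp ?C (i, a) (j, b) (d, x) g f) (cmp ?C (i, a) (j, b) (d, x) g' f) \<and>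
        cmp ?C (i, a) (j, b) (d, x) g (add (homm ?C (i, a) (j, b)) f f') = add (homm ?C (i, a) (d, x)) (cmp ?C (i, a) (j, b) (d, x) g f) (cmp ?C (i, a) (j, b) (d, x) g f') \<and>
        (\<forall>r\<in>carrier R.
          cmp ?C (i, a) (j, b) (d, x) (smult (homm ?C (j, b) (d, x)) r g) f = smult (homm ?C (i, a) (d, x)) r (cmp ?C (i, a) (j, b) (d, x) g f) \<and>
          cmp ?C (i, a) (j, b) (d, x) g (smult (homm ?C (i, a) (j, b)) r f) = smult (homm ?C (i, a) (d, x)) r (cmp ?C (i, a) (j, b) (d, x) g f))"
    proof (cases "i = j \<and> j = d")
      case True
      then have e: "j = i" "d = i" by auto
      have f1: "f \<in> carrier (homm (Cf i) a b)" "f' \<in> carrier (homm (Cf i) a b)" using f f' unfolding e coprod_homm_eq by auto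
      have g1: "g \<in> carrier (homm (Cf i) b x)" "g' \<in> carrier (homm (Cf i) b x)" using g g' unfolding e coprod_homm_eq by auto
      have o: "b \<in> ob (Cf i)" "x \<in> ob (Cf i)" using b x unfolding e by simp_all
      show ?thesis unfolding e coprod_cmp_eq coprod_homm_eq
        using lc_addl[OF Li a(2) o f1(1) g1] lc_addr[OF Li a(2) o f1 g1(1)]
          lc_smultl[OF Li a(2) o f1(1) g1(1)] lc_smultr[OF Li a(2) o f1(1) g1(1)]
        by blast
    next
      case False
      show ?thesis
      proof (cases "i = d")
        case True
        have j: "j \<noteq> i" using False True by auto
        have z: "zero (homm (Cf i) a x) \<in> carrier (homm (Cf i) a x)" using lc_zero[OF Li a(2)] x True by simp
        have zz: "add (homm (Cf i) a x) (zero (homm (Cf i) a x)) (zero (homm (Cf i) a x)) = zero (homm (Cf i) a x)"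
          by (rule abelian_monoid.l_zero[OF lc_am[OF Li a(2)] z]) (use x True in simp)
        have zs: "\<And>r. r \<in> carrier R \<Longrightarrow> smult (homm (Cf i) a x) r (zero (homm (Cf i) a x)) = zero (homm (Cf i) a x)"
          by (rule module.smult_r_null[OF lc_mod[OF Li a(2)]]) (use x True in simp)
        show ?thesis unfolding True[symmetric] coprod_cmp_mid[OF j] coprod_homm_eq using zz zs by simp
      next
        case False
        then show ?thesis by (simp only: coprod_cmp_ne[OF False] coprod_homm_ne[OF False] zmod_simps) simp
      qed
    qed
  qed
qed

section \<open>Abstract criterion for an equivalence\<close>

lemma equiv_criterion:
  fixes R :: "('r, 'x) ring_scheme" and C :: "('o1, 'r, 'm1) lincat" and D :: "('o2, 'r, 'm2) lincat"
    and J :: "('o2, 'm2, 'o1, 'm1) lfunctor" and P :: "'o1 \<Rightarrow> 'o2" and e e' :: "'o1 \<Rightarrow> 'm1"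
  assumes lcC: "lincat R C" and lcD: "lincat R D" and J: "lin_functor R D C J"
    and faith: "\<And>X Y. X \<in> ob D \<Longrightarrow> Y \<in> ob D \<Longrightarrow> inj_on (fm J X Y) (carrier (homm D X Y))"
    and P: "\<And>A. A \<in> ob C \<Longrightarrow> P A \<in> ob D"
    and e: "\<And>A. A \<in> ob C \<Longrightarrow> e A \<in> carrier (homm C A (fo J (P A)))"
    and e': "\<And>A. A \<in> ob C \<Longrightarrow> e' A \<in> carrier (homm C (fo J (P A)) A)"
    and inv1: "\<And>A. A \<in> ob C \<Longrightarrow> cmp C A (fo J (P A)) A (e' A) (e A) = ide C A"
    and inv2: "\<And>A. A \<in> ob C \<Longrightarrow> cmp C (fo J (P A)) A (fo J (P A)) (e A) (e' A) = ide C (fo J (P A))"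
    and full: "\<And>A B f. A \<in> ob C \<Longrightarrow> B \<in> ob C \<Longrightarrow> f \<in> carrier (homm C A B) \<Longrightarrow>
        \<exists>d\<in>carrier (homm D (P A) (P B)). fm J (P A) (P B) d =
          cmp C (fo J (P A)) A (fo J (P B)) (cmp C A B (fo J (P B)) (e B) f) (e' A)"
    and PJ: "\<And>X. X \<in> ob D \<Longrightarrow> P (fo J X) = X"
    and eJ: "\<And>X. X \<in> ob D \<Longrightarrow> e (fo J X) = ide C (fo J X)"
  shows "lincat_equiv R C D"
proof -
  define cj where "cj A B f = cmp C (fo J (P A)) A (fo J (P B)) (cmp C A B (fo J (P B)) (e B) f) (e' A)" for A B f
  define Q :: "('o1, 'm1, 'o2, 'm2) lfunctor" where
    "Q = \<lparr>fo = P, fm = (\<lambda>A B f. SOME d. d \<in> carrier (homm D (P A) (P B)) \<and> fm J (P A) (P B) d = cj A B f)\<rparr>"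
  have JP: "A \<in> ob C \<Longrightarrow> fo J (P A) \<in> ob C" for A using lf_ob[OF J P] by blast
  have cj_cl: "cj A B f \<in> carrier (homm C (fo J (P A)) (fo J (P B)))"
    if "A \<in> ob C" "B \<in> ob C" "f \<in> carrier (homm C A B)" for A B f
    unfolding cj_def
    by (rule lc_cmp[OF lcC JP[OF that(1)] that(1) JP[OF that(2)] e'[OF that(1)] lc_cmp[OF lcC that(1,2) JP[OF that(2)] that(3) e[OF that(2)]]])
  have Qo: "fo Q A = P A" for A by (simp add: Q_def)
  have Qspec: "fm Q A B f \<in> carrier (homm D (P A) (P B)) \<and> fm J (P A) (P B) (fm Q A B f) = cj A B f"
    if "A \<in> ob C" "B \<in> ob C" "f \<in> carrier (homm C A B)" for A B f
  proof -
    have "\<exists>d. d \<in> carrier (homm D (P A) (P B)) \<and> fm J (P A) (P B) d = cj A B f"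
      using full[OF that] unfolding cj_def by blast
    then have "(SOME d. d \<in> carrier (homm D (P A) (P B)) \<and> fm J (P A) (P B) d = cj A B f) \<in> carrier (homm D (P A) (P B)) \<and>
        fm J (P A) (P B) (SOME d. d \<in> carrier (homm D (P A) (P B)) \<and> fm J (P A) (P B) d = cj A B f) = cj A B f"
      by (rule someI_ex)
    then show ?thesis unfolding Q_def by simp
  qed
  have Qunique: "fm Q A B f = d"
    if "A \<in> ob C" "B \<in> ob C" "f \<in> carrier (homm C A B)" "d \<in> carrier (homm D (P A) (P B))"
       "fm J (P A) (P B) d = cj A B f" for A B f d
    using inj_onD[OF faith[OF P[OF that(1)] P[OF that(2)]], of "fm Q A B f" d] Qspec[OF that(1-3)] that(4,5) by simp
  have e'J: "e' (fo J X) = ide C (fo J X)" if "X \<in> ob D" for X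
  proof -
    have o: "fo J X \<in> ob C" by (rule lf_ob[OF J that])
    have "cmp C (fo J X) (fo J X) (fo J X) (e' (fo J X)) (ide C (fo J X)) = ide C (fo J X)"
      using inv1[OF o] eJ[OF that] PJ[OF that] by simp
    moreover have "e' (fo J X) \<in> carrier (homm C (fo J X) (fo J X))" using e'[OF o] PJ[OF that] by simp
    ultimately show ?thesis using lc_idr[OF lcC o o] by simp
  qed

  have cj_cmp: "cmp C (fo J (P A)) (fo J (P B)) (fo J (P E)) (cj B E g) (cj A B f) = cj A E (cmp C A B E g f)"
    if A: "A \<in> ob C" and B: "B \<in> ob C" and E: "E \<in> ob C" and f: "f \<in> carrier (homm C A B)"
      and g: "g \<in> carrier (homm C B E)" for A B E f g
  proof -
    let ?JA = "fo J (P A)" and ?JB = "fo J (P B)" and ?JE = "fo J (P E)"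
    let ?u = "cmp C B E ?JE (e E) g" and ?v = "cmp C A B ?JB (e B) f"
    have u: "?u \<in> carrier (homm C B ?JE)" by (rule lc_cmp[OF lcC B E JP[OF E] g e[OF E]])
    have v: "?v \<in> carrier (homm C A ?JB)" by (rule lc_cmp[OF lcC A B JP[OF B] f e[OF B]])
    have ue: "cmp C ?JB B ?JE ?u (e' B) \<in> carrier (homm C ?JB ?JE)" by (rule lc_cmp[OF lcC JP[OF B] B JP[OF E] e'[OF B] u])
    have "cmp C ?JA ?JB ?JE (cj B E g) (cj A B f) = cmp C ?JA ?JB ?JE (cmp C ?JB B ?JE ?u (e' B)) (cmp C ?JA A ?JB ?v (e' A))"
      unfolding cj_def ..
    also have "\<dots> = cmp C ?JA A ?JE (cmp C A ?JB ?JE (cmp C ?JB B ?JE ?u (e' B)) ?v) (e' A)"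
      by (rule lc_assoc[OF lcC JP[OF A] A JP[OF B] JP[OF E] e'[OF A] v ue])
    also have "cmp C A ?JB ?JE (cmp C ?JB B ?JE ?u (e' B)) ?v = cmp C A B ?JE ?u (cmp C A ?JB B (e' B) ?v)"
      by (rule lc_assoc[OF lcC A JP[OF B] B JP[OF E] v e'[OF B] u, symmetric])
    also have "cmp C A ?JB B (e' B) ?v = cmp C A B B (cmp C B ?JB B (e' B) (e B)) f"
      by (rule lc_assoc[OF lcC A B JP[OF B] B f e[OF B] e'[OF B]])
    also have "\<dots> = f" unfolding inv1[OF B] by (rule lc_idl[OF lcC A B f])
    also have "cmp C A B ?JE ?u f = cmp C A E ?JE (e E) (cmp C A B E g f)"
      by (rule lc_assoc[OF lcC A B E JP[OF E] f g e[OF E], symmetric])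
    finally show ?thesis unfolding cj_def .
  qed
  have cj_ide: "cj A A (ide C A) = ide C (fo J (P A))" if A: "A \<in> ob C" for A
    unfolding cj_def using lc_idr[OF lcC A JP[OF A] e[OF A]] inv2[OF A] by simp
  have cj_add: "cj A B (add (homm C A B) f f') = add (homm C (fo J (P A)) (fo J (P B))) (cj A B f) (cj A B f')"
    if A: "A \<in> ob C" and B: "B \<in> ob C" and f: "f \<in> carrier (homm C A B)" and f': "f' \<in> carrier (homm C A B)" for A B f f'
    unfolding cj_def
    using lc_addr[OF lcC A B JP[OF B] f f' e[OF B]]
      lc_addl[OF lcC JP[OF A] A JP[OF B] e'[OF A] lc_cmp[OF lcC A B JP[OF B] f e[OF B]] lc_cmp[OF lcC A B JP[OF B] f' e[OF B]]]
    by simp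
  have cj_smult: "cj A B (smult (homm C A B) r f) = smult (homm C (fo J (P A)) (fo J (P B))) r (cj A B f)"
    if A: "A \<in> ob C" and B: "B \<in> ob C" and f: "f \<in> carrier (homm C A B)" and r: "r \<in> carrier R" for A B f r
    unfolding cj_def
    using lc_smultr[OF lcC A B JP[OF B] f e[OF B] r]
      lc_smultl[OF lcC JP[OF A] A JP[OF B] e'[OF A] lc_cmp[OF lcC A B JP[OF B] f e[OF B]] r]
    by simp
  have Qf: "lin_functor R C D Q"
    unfolding lin_functor_def Qo
  proof (intro conjI ballI)
    fix A assume A: "A \<in> ob C"
    show "P A \<in> ob D" by (rule P[OF A])
    show "fm Q A A (ide C A) = ide D (P A)"
    proof (rule Qunique[OF A A lc_ide[OF lcC A] lc_ide[OF lcD P[OF A]]])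
      show "fm J (P A) (P A) (ide D (P A)) = cj A A (ide C A)" using lf_ide[OF J P[OF A]] cj_ide[OF A] by simp
    qed
  next
    fix A B f assume A: "A \<in> ob C" and B: "B \<in> ob C" and f: "f \<in> carrier (homm C A B)"
    show "fm Q A B f \<in> carrier (homm D (P A) (P B))" using Qspec[OF A B f] by blast
  next
    fix A B E f g assume A: "A \<in> ob C" and B: "B \<in> ob C" and E: "E \<in> ob C"
      and f: "f \<in> carrier (homm C A B)" and g: "g \<in> carrier (homm C B E)"
    have qf: "fm Q A B f \<in> carrier (homm D (P A) (P B))" using Qspec[OF A B f] by blast
    have qg: "fm Q B E g \<in> carrier (homm D (P B) (P E))" using Qspec[OF B E g] by blast
    show "fm Q A E (cmp C A B E g f) = cmp D (P A) (P B) (P E) (fm Q B E g) (fm Q A B f)"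
    proof (rule Qunique[OF A E lc_cmp[OF lcC A B E f g] lc_cmp[OF lcD P[OF A] P[OF B] P[OF E] qf qg]])
      show "fm J (P A) (P E) (cmp D (P A) (P B) (P E) (fm Q B E g) (fm Q A B f)) = cj A E (cmp C A B E g f)"
        using lf_cmp[OF J P[OF A] P[OF B] P[OF E] qf qg] Qspec[OF A B f] Qspec[OF B E g] cj_cmp[OF A B E f g] by simp
    qed
  next
    fix A B f f' assume A: "A \<in> ob C" and B: "B \<in> ob C" and f: "f \<in> carrier (homm C A B)" and f': "f' \<in> carrier (homm C A B)"
    have qf: "fm Q A B f \<in> carrier (homm D (P A) (P B))" using Qspec[OF A B f] by blast
    have qf': "fm Q A B f' \<in> carrier (homm D (P A) (P B))" using Qspec[OF A B f'] by blast
    have am: "abelian_monoid (homm C A B)" by (rule lc_am[OF lcC A B])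
    have amD: "abelian_monoid (homm D (P A) (P B))" by (rule lc_am[OF lcD P[OF A] P[OF B]])
    show "fm Q A B (add (homm C A B) f f') = add (homm D (P A) (P B)) (fm Q A B f) (fm Q A B f')"
    proof (rule Qunique[OF A B abelian_monoid.a_closed[OF am f f'] abelian_monoid.a_closed[OF amD qf qf']])
      show "fm J (P A) (P B) (add (homm D (P A) (P B)) (fm Q A B f) (fm Q A B f')) = cj A B (add (homm C A B) f f')"
        using lf_add[OF J P[OF A] P[OF B] qf qf'] Qspec[OF A B f] Qspec[OF A B f'] cj_add[OF A B f f'] by simp
    qed
  next
    fix A B f f' r assume A: "A \<in> ob C" and B: "B \<in> ob C" and f: "f \<in> carrier (homm C A B)" and f': "f' \<in> carrier (homm C A B)"
      and r: "r \<in> carrier R"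
    have qf: "fm Q A B f \<in> carrier (homm D (P A) (P B))" using Qspec[OF A B f] by blast
    show "fm Q A B (smult (homm C A B) r f) = smult (homm D (P A) (P B)) r (fm Q A B f)"
    proof (rule Qunique[OF A B module.smult_closed[OF lc_mod[OF lcC A B] r f] module.smult_closed[OF lc_mod[OF lcD P[OF A] P[OF B]] r qf]])
      show "fm J (P A) (P B) (smult (homm D (P A) (P B)) r (fm Q A B f)) = cj A B (smult (homm C A B) r f)"
        using lf_smult[OF J P[OF A] P[OF B] qf r] Qspec[OF A B f] cj_smult[OF A B f r] by simp
    qed
  qed
  have eta: "nat_iso C C fid (fcomp J Q) e"
    unfolding nat_iso_def fid_def fcomp_def
  proof (simp add: Qo, intro conjI ballI)
    fix A assume A: "A \<in> ob C"
    show "e A \<in> carrier (homm C A (fo J (P A)))" by (rule e[OF A])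
    show "\<exists>\<theta>\<in>carrier (homm C (fo J (P A)) A). cmp C A (fo J (P A)) A \<theta> (e A) = ide C A \<and>
          cmp C (fo J (P A)) A (fo J (P A)) (e A) \<theta> = ide C (fo J (P A))"
      using e'[OF A] inv1[OF A] inv2[OF A] by blast
  next
    fix A B f assume A: "A \<in> ob C" and B: "B \<in> ob C" and f: "f \<in> carrier (homm C A B)"
    have "cmp C A (fo J (P A)) (fo J (P B)) (cj A B f) (e A) = cmp C A B (fo J (P B)) (e B) f"
    proof -
      have v: "cmp C A B (fo J (P B)) (e B) f \<in> carrier (homm C A (fo J (P B)))" by (rule lc_cmp[OF lcC A B JP[OF B] f e[OF B]])
      have "cmp C A (fo J (P A)) (fo J (P B)) (cj A B f) (e A)
          = cmp C A A (fo J (P B)) (cmp C A B (fo J (P B)) (e B) f) (cmp C A (fo J (P A)) A (e' A) (e A))"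
        unfolding cj_def by (rule lc_assoc[OF lcC A JP[OF A] A JP[OF B] e[OF A] e'[OF A] v, symmetric])
      also have "\<dots> = cmp C A B (fo J (P B)) (e B) f" unfolding inv1[OF A] by (rule lc_idr[OF lcC A JP[OF B] v])
      finally show ?thesis .
    qed
    then show "cmp C A (fo J (P A)) (fo J (P B)) (fm J (P A) (P B) (fm Q A B f)) (e A) = cmp C A B (fo J (P B)) (e B) f"
      using Qspec[OF A B f] by simp
  qed
  have eps: "nat_iso D D fid (fcomp Q J) (ide D)"
    unfolding nat_iso_def fid_def fcomp_def
  proof (simp add: Qo, intro conjI ballI)
    fix X assume X: "X \<in> ob D"
    show "ide D X \<in> carrier (homm D X (P (fo J X)))" using lc_ide[OF lcD X] PJ[OF X] by simp
    show "\<exists>\<theta>\<in>carrier (homm D (P (fo J X)) X). cmp D X (P (fo J X)) X \<theta> (ide D X) = ide D X \<and>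
          cmp D (P (fo J X)) X (P (fo J X)) (ide D X) \<theta> = ide D (P (fo J X))"
      using lc_ide[OF lcD X] lc_idl[OF lcD X X lc_ide[OF lcD X]] PJ[OF X] by auto
  next
    fix X Y f assume X: "X \<in> ob D" and Y: "Y \<in> ob D" and f: "f \<in> carrier (homm D X Y)"
    have oX: "fo J X \<in> ob C" by (rule lf_ob[OF J X])
    have oY: "fo J Y \<in> ob C" by (rule lf_ob[OF J Y])
    have Jf: "fm J X Y f \<in> carrier (homm C (fo J X) (fo J Y))" by (rule lf_hom[OF J X Y f])
    have "fm Q (fo J X) (fo J Y) (fm J X Y f) = f"
    proof (rule Qunique[OF oX oY Jf])
      show "f \<in> carrier (homm D (P (fo J X)) (P (fo J Y)))" using f PJ[OF X] PJ[OF Y] by simp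
      have "cj (fo J X) (fo J Y) (fm J X Y f) = fm J X Y f"
        unfolding cj_def PJ[OF X] PJ[OF Y] eJ[OF Y] e'J[OF X]
        using lc_idl[OF lcC oX oY Jf] lc_idr[OF lcC oX oY] Jf by simp
      then show "fm J (P (fo J X)) (P (fo J Y)) f = cj (fo J X) (fo J Y) (fm J X Y f)"
        using PJ[OF X] PJ[OF Y] by simp
    qed
    then show "cmp D X (P (fo J X)) (P (fo J Y)) (fm Q (fo J X) (fo J Y) (fm J X Y f)) (ide D X) = cmp D X Y (P (fo J Y)) (ide D Y) f"
      using PJ[OF X] PJ[OF Y] lc_idr[OF lcD X Y f] lc_idl[OF lcD X Y f] by simp
  qed
  show ?thesis unfolding lincat_equiv_def using lcC lcD Qf J eta eps by blast
qed

locale msetup =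
  fixes R :: "('r, 'x) ring_scheme" and G :: "('g, 'y) monoid_scheme" and Z :: "'z set"
    and \<phi> :: "'g \<Rightarrow> 'z \<Rightarrow> 'z" and Af :: "'z \<Rightarrow> ('o, 'r, 'm) lincat"
    and \<alpha> :: "'g \<Rightarrow> ('z \<times> 'o, 'm, 'z \<times> 'o, 'm) lfunctor" and T :: "'z set"
  assumes cR: "cring R" and grp: "group G" and ga: "group_action G Z \<phi>"
    and lAf: "\<forall>z\<in>Z. lincat R (Af z)"
    and act: "lincat_action R G (coprod Z Af) \<alpha>"
    and fibr: "\<forall>g\<in>carrier G. \<forall>z\<in>Z. (\<forall>a\<in>ob (Af z). fst (fo (\<alpha> g) (z, a)) = \<phi> g z)
                              \<and> lin_iso R (Af z) (Af (\<phi> g z)) (restr \<alpha> z g)"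
    and TZ: "T \<subseteq> Z"
    and orb: "\<forall>z\<in>Z. \<exists>!t. t \<in> T \<and> t \<in> orbit G \<phi> z"
begin

abbreviation "C0 \<equiv> coprod Z Af"
abbreviation "stab t \<equiv> stabilizer G \<phi> t"
abbreviation "XC0 \<equiv> cross G (carrier G) C0 \<alpha>"
abbreviation "DD \<equiv> coprod T (\<lambda>z. cross G (stab z) (Af z) (restr \<alpha> z))"

lemma lc0: "lincat R C0"
  by (rule coprod_lincat[OF cR lAf])

lemma actD1: "\<forall>g\<in>carrier G. lin_functor R C0 C0 (\<alpha> g)"
  using act unfolding lincat_action_def by (elim conjE) assumption
lemma actD2: "\<forall>A\<in>ob C0. fo (\<alpha> \<one>\<^bsub>G\<^esub>) A = A"
  using act unfolding lincat_action_def by (elim conjE) assumption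
lemma actD3: "\<forall>A\<in>ob C0. \<forall>B\<in>ob C0. \<forall>f\<in>carrier (homm C0 A B). fm (\<alpha> \<one>\<^bsub>G\<^esub>) A B f = f"
  using act unfolding lincat_action_def by (elim conjE) assumption
lemma actD4: "\<forall>g\<in>carrier G. \<forall>h\<in>carrier G. \<forall>A\<in>ob C0. fo (\<alpha> (g \<otimes>\<^bsub>G\<^esub> h)) A = fo (\<alpha> g) (fo (\<alpha> h) A)"
  using act unfolding lincat_action_def by (elim conjE) assumption
lemma actD5: "\<forall>g\<in>carrier G. \<forall>h\<in>carrier G. \<forall>A\<in>ob C0. \<forall>B\<in>ob C0. \<forall>f\<in>carrier (homm C0 A B).
        fm (\<alpha> (g \<otimes>\<^bsub>G\<^esub> h)) A B f = fm (\<alpha> g) (fo (\<alpha> h) A) (fo (\<alpha> h) B) (fm (\<alpha> h) A B f)"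
  using act unfolding lincat_action_def by (elim conjE) assumption

lemma a_fun: "g \<in> carrier G \<Longrightarrow> lin_functor R C0 C0 (\<alpha> g)"
  using actD1 by simp
lemma a_1o: "A \<in> ob C0 \<Longrightarrow> fo (\<alpha> \<one>\<^bsub>G\<^esub>) A = A"
  using actD2 by simp
lemma a_1m: "A \<in> ob C0 \<Longrightarrow> B \<in> ob C0 \<Longrightarrow> f \<in> carrier (homm C0 A B) \<Longrightarrow> fm (\<alpha> \<one>\<^bsub>G\<^esub>) A B f = f"
  using actD3 by simp
lemma a_mo: "g \<in> carrier G \<Longrightarrow> h \<in> carrier G \<Longrightarrow> A \<in> ob C0 \<Longrightarrow> fo (\<alpha> (g \<otimes>\<^bsub>G\<^esub> h)) A = fo (\<alpha> g) (fo (\<alpha> h) A)"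
  using actD4 by simp
lemma a_mm: "g \<in> carrier G \<Longrightarrow> h \<in> carrier G \<Longrightarrow> A \<in> ob C0 \<Longrightarrow> B \<in> ob C0 \<Longrightarrow> f \<in> carrier (homm C0 A B) \<Longrightarrow>
    fm (\<alpha> (g \<otimes>\<^bsub>G\<^esub> h)) A B f = fm (\<alpha> g) (fo (\<alpha> h) A) (fo (\<alpha> h) B) (fm (\<alpha> h) A B f)"
  using actD5 by simp

lemma xs0: "xsetup R G (carrier G) C0 \<alpha>"
  by (rule xsetup.intro[OF lc0 grp group.subgroup_self[OF grp] a_fun a_1o a_1m a_mo a_mm])

lemma lcX: "lincat R XC0"
  by (rule xsetup.cross_lincat[OF xs0])

lemma phi_in: "g \<in> carrier G \<Longrightarrow> z \<in> Z \<Longrightarrow> \<phi> g z \<in> Z"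
  using group_action.element_image[OF ga] by blast
lemma phi1: "z \<in> Z \<Longrightarrow> \<phi> \<one>\<^bsub>G\<^esub> z = z"
  by (metis group_action.id_eq_one[OF ga] restrict_apply')
lemma phi_mul: "g \<in> carrier G \<Longrightarrow> h \<in> carrier G \<Longrightarrow> z \<in> Z \<Longrightarrow> \<phi> (g \<otimes>\<^bsub>G\<^esub> h) z = \<phi> g (\<phi> h z)"
  using group_action.composition_rule[OF ga] by blast

lemma fst_a: "g \<in> carrier G \<Longrightarrow> z \<in> Z \<Longrightarrow> a \<in> ob (Af z) \<Longrightarrow> fst (fo (\<alpha> g) (z, a)) = \<phi> g z"
  using fibr by simp
lemma pair_a: "g \<in> carrier G \<Longrightarrow> z \<in> Z \<Longrightarrow> a \<in> ob (Af z) \<Longrightarrow> fo (\<alpha> g) (z, a) = (\<phi> g z, fo (restr \<alpha> z g) a)"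
  using fst_a[of g z a] by (simp add: restr_def prod_eq_iff)
lemma liso: "g \<in> carrier G \<Longrightarrow> z \<in> Z \<Longrightarrow> lin_iso R (Af z) (Af (\<phi> g z)) (restr \<alpha> z g)"
  using fibr by simp
lemma rfun: assumes "g \<in> carrier G" "z \<in> Z" shows "lin_functor R (Af z) (Af (\<phi> g z)) (restr \<alpha> z g)"
  using liso[OF assms] unfolding lin_iso_def by (elim conjE)
lemma r_ob: "g \<in> carrier G \<Longrightarrow> z \<in> Z \<Longrightarrow> a \<in> ob (Af z) \<Longrightarrow> fo (restr \<alpha> z g) a \<in> ob (Af (\<phi> g z))"
  by (rule lf_ob[OF rfun])

lemma restr_fo: "fo (restr \<alpha> z g) a = snd (fo (\<alpha> g) (z, a))"
  by (simp add: restr_def)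
lemma restr_fm: "fm (restr \<alpha> z g) a b f = fm (\<alpha> g) (z, a) (z, b) f"
  by (simp add: restr_def)

lemma ob0: "(z, a) \<in> ob C0 \<longleftrightarrow> z \<in> Z \<and> a \<in> ob (Af z)"
  by (simp add: coprod_ob)

lemma stab_mem: "g \<in> stab t \<longleftrightarrow> g \<in> carrier G \<and> \<phi> g t = t"
  by (simp add: stabilizer_def)

lemma xsT: assumes t: "t \<in> Z" shows "xsetup R G (stab t) (Af t) (restr \<alpha> t)"
proof (rule xsetup.intro)
  show "lincat R (Af t)" using lAf t by blast
  show "group G" by (rule grp)
  show "subgroup (stab t) G" by (rule group_action.stabilizer_subgroup[OF ga t])
  fix g assume g: "g \<in> stab t"
  then show "lin_functor R (Af t) (Af t) (restr \<alpha> t g)" using rfun[of g t] t by (simp add: stab_mem)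
next
  fix a assume a: "a \<in> ob (Af t)"
  show "fo (restr \<alpha> t \<one>\<^bsub>G\<^esub>) a = a"
    using a_1o[of "(t, a)"] a t by (simp add: restr_fo ob0)
next
  fix a b f assume a: "a \<in> ob (Af t)" and b: "b \<in> ob (Af t)" and f: "f \<in> carrier (homm (Af t) a b)"
  show "fm (restr \<alpha> t \<one>\<^bsub>G\<^esub>) a b f = f"
    using a_1m[of "(t, a)" "(t, b)" f] a b f t by (simp add: restr_fm ob0 coprod_homm)
next
  fix g h a assume g: "g \<in> stab t" and h: "h \<in> stab t" and a: "a \<in> ob (Af t)"
  have gG: "g \<in> carrier G" "\<phi> g t = t" and hG: "h \<in> carrier G" "\<phi> h t = t" using g h by (auto simp: stab_mem)
  have ha: "fo (\<alpha> h) (t, a) = (t, fo (restr \<alpha> t h) a)" using pair_a[OF hG(1) t a] hG(2) by simp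
  have "fo (restr \<alpha> t (g \<otimes>\<^bsub>G\<^esub> h)) a = snd (fo (\<alpha> g) (fo (\<alpha> h) (t, a)))"
    using a_mo[OF gG(1) hG(1), of "(t, a)"] a t by (simp add: restr_fo ob0)
  also have "\<dots> = snd (fo (\<alpha> g) (t, fo (restr \<alpha> t h) a))" unfolding ha ..
  also have "\<dots> = fo (restr \<alpha> t g) (fo (restr \<alpha> t h) a)" unfolding restr_fo[of t g] ..
  finally show "fo (restr \<alpha> t (g \<otimes>\<^bsub>G\<^esub> h)) a = fo (restr \<alpha> t g) (fo (restr \<alpha> t h) a)" .
next
  fix g h a b f assume g: "g \<in> stab t" and h: "h \<in> stab t" and a: "a \<in> ob (Af t)" and b: "b \<in> ob (Af t)"
    and f: "f \<in> carrier (homm (Af t) a b)"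
  have gG: "g \<in> carrier G" "\<phi> g t = t" and hG: "h \<in> carrier G" "\<phi> h t = t" using g h by (auto simp: stab_mem)
  have ha: "fo (\<alpha> h) (t, a) = (t, fo (restr \<alpha> t h) a)" using pair_a[OF hG(1) t a] hG(2) by simp
  have hb: "fo (\<alpha> h) (t, b) = (t, fo (restr \<alpha> t h) b)" using pair_a[OF hG(1) t b] hG(2) by simp
  have "fm (restr \<alpha> t (g \<otimes>\<^bsub>G\<^esub> h)) a b f = fm (\<alpha> g) (fo (\<alpha> h) (t, a)) (fo (\<alpha> h) (t, b)) (fm (\<alpha> h) (t, a) (t, b) f)"
    using a_mm[OF gG(1) hG(1), of "(t, a)" "(t, b)" f] a b f t by (simp add: restr_fm ob0 coprod_homm)
  also have "\<dots> = fm (\<alpha> g) (t, fo (restr \<alpha> t h) a) (t, fo (restr \<alpha> t h) b) (fm (\<alpha> h) (t, a) (t, b) f)" unfolding ha hb ..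
  also have "\<dots> = fm (restr \<alpha> t g) (fo (restr \<alpha> t h) a) (fo (restr \<alpha> t h) b) (fm (restr \<alpha> t h) a b f)"
    unfolding restr_fm ..
  finally show "fm (restr \<alpha> t (g \<otimes>\<^bsub>G\<^esub> h)) a b f = fm (restr \<alpha> t g) (fo (restr \<alpha> t h) a) (fo (restr \<alpha> t h) b) (fm (restr \<alpha> t h) a b f)" .
qed

lemma lcD: "lincat R DD"
  by (rule coprod_lincat[OF cR]) (use xsetup.cross_lincat[OF xsT] TZ in blast)

lemma orbit_mem: "t \<in> orbit G \<phi> z \<longleftrightarrow> (\<exists>g\<in>carrier G. \<phi> g z = t)"
  by (auto simp: orbit_def)

lemma rep_unique: assumes "t \<in> T" "t' \<in> T" "g \<in> carrier G" "\<phi> g t = t'" shows "t = t'"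
proof -
  have tZ: "t \<in> Z" using assms TZ by blast
  have "t \<in> orbit G \<phi> t" by (rule group_action.orbit_refl[OF ga tZ])
  moreover have "t' \<in> orbit G \<phi> t" using assms by (auto simp: orbit_mem)
  ultimately show ?thesis using orb tZ assms by blast
qed

definition tz :: "'z \<Rightarrow> 'z" where "tz z = (THE t. t \<in> T \<and> t \<in> orbit G \<phi> z)"
definition gz :: "'z \<Rightarrow> 'g" where "gz z = (if z \<in> T then \<one>\<^bsub>G\<^esub> else (SOME g. g \<in> carrier G \<and> \<phi> g z = tz z))"

lemma tz_prop: "z \<in> Z \<Longrightarrow> tz z \<in> T \<and> tz z \<in> orbit G \<phi> z"
  unfolding tz_def by (rule theI') (use orb in blast)
lemma tz_T: "z \<in> T \<Longrightarrow> tz z = z"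
  unfolding tz_def
  by (rule the1_equality) (use orb TZ group_action.orbit_refl[OF ga] in blast)+
lemma gz_prop: assumes "z \<in> Z" shows "gz z \<in> carrier G" "\<phi> (gz z) z = tz z"
proof -
  have "\<exists>g. g \<in> carrier G \<and> \<phi> g z = tz z" using tz_prop[OF assms] by (auto simp: orbit_mem)
  then have "(SOME g. g \<in> carrier G \<and> \<phi> g z = tz z) \<in> carrier G \<and> \<phi> (SOME g. g \<in> carrier G \<and> \<phi> g z = tz z) z = tz z"
    by (rule someI_ex)
  then show "gz z \<in> carrier G" "\<phi> (gz z) z = tz z"
    unfolding gz_def using grp phi1[OF assms] tz_T by (auto simp: group.is_monoid monoid.one_closed)
qed
lemma gz_T: "z \<in> T \<Longrightarrow> gz z = \<one>\<^bsub>G\<^esub>"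
  by (simp add: gz_def)

end

definition xdelta :: "'g set \<Rightarrow> ('o, 'r, 'm) lincat \<Rightarrow> ('g \<Rightarrow> ('o, 'm, 'o, 'm) lfunctor) \<Rightarrow> 'o \<Rightarrow> 'o \<Rightarrow> 'g \<Rightarrow> 'm \<Rightarrow> ('g \<Rightarrow> 'm)" where
  "xdelta H C \<alpha> A B h u = (\<lambda>k. if k = h then u else if k \<in> H then zero (homm C (fo (\<alpha> k) A) B) else undefined)"

context xsetup begin

lemma delta_closed:
  assumes A: "A \<in> ob C" and B: "B \<in> ob C" and h: "h \<in> H" and u: "u \<in> carrier (Hm (ao h A) B)"
  shows "xdelta H C \<alpha> A B h u \<in> carrier (XH A B)"
proof (rule XH_I)
  fix k assume k: "k \<in> H"
  show "xdelta H C \<alpha> A B h u k \<in> carrier (Hm (ao k A) B)"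
    using u k lc_zero[OF lc aob[OF k A] B] by (auto simp: xdelta_def)
next
  fix k assume "k \<notin> H" then show "xdelta H C \<alpha> A B h u k = undefined" using h by (auto simp: xdelta_def)
next
  show "finite (sp A B (xdelta H C \<alpha> A B h u))"
    by (rule sp_finite_sub[of "{h}"]) (auto simp: xdelta_def)
qed

lemma delta_cmp_left:
  assumes A: "A \<in> ob C" and B: "B \<in> ob C" and D: "D \<in> ob C" and h: "h \<in> H"
    and u: "u \<in> carrier (Hm (ao h B) D)" and f: "f \<in> carrier (XH A B)"
  shows "cmp XC A B D (xdelta H C \<alpha> B D h u) f =
    (\<lambda>k. if k \<in> H then cmp C (ao k A) (ao h B) D u (fm (\<alpha> h) (ao (mul (iv h) k) A) B (f (mul (iv h) k))) else undefined)"
proof (rule XH_eqI)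
  fix k assume k: "k \<in> H"
  have "cmp XC A B D (xdelta H C \<alpha> B D h u) f k = finsum (Hm (ao k A) D) (xtrm G C \<alpha> A B D (xdelta H C \<alpha> B D h u) f k) {h}"
    by (rule cmp_super[OF A B D delta_closed[OF B D h u] f k]) (auto simp: xdelta_def xsupp_def h)
  also have "\<dots> = xtrm G C \<alpha> A B D (xdelta H C \<alpha> B D h u) f k h"
    using abelian_monoid.finsum_single_nz[OF pam[OF k A D], of "{h}" _ h]
      trm_closed[OF A B D delta_closed[OF B D h u] f k h] by simp
  also have "\<dots> = cmp C (ao k A) (ao h B) D u (fm (\<alpha> h) (ao (mul (iv h) k) A) B (f (mul (iv h) k)))"
    by (simp add: trm_unfold xdelta_def)
  finally show "cmp XC A B D (xdelta H C \<alpha> B D h u) f k =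
    (\<lambda>k. if k \<in> H then cmp C (ao k A) (ao h B) D u (fm (\<alpha> h) (ao (mul (iv h) k) A) B (f (mul (iv h) k))) else undefined) k"
    using k by simp
qed (simp_all add: cross_simps)

lemma delta_delta:
  assumes A: "A \<in> ob C" and B: "B \<in> ob C" and D: "D \<in> ob C" and h: "h \<in> H" and h': "h' \<in> H"
    and u: "u \<in> carrier (Hm (ao h B) D)" and u': "u' \<in> carrier (Hm (ao h' A) B)"
  shows "cmp XC A B D (xdelta H C \<alpha> B D h u) (xdelta H C \<alpha> A B h' u') =
     xdelta H C \<alpha> A D (mul h h') (cmp C (ao (mul h h') A) (ao h B) D u (fm (\<alpha> h) (ao h' A) B u'))"
  unfolding delta_cmp_left[OF A B D h u delta_closed[OF A B h' u']]
proof (rule ext)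
  fix k
  show "(if k \<in> H then cmp C (ao k A) (ao h B) D u (fm (\<alpha> h) (ao (mul (iv h) k) A) B (xdelta H C \<alpha> A B h' u' (mul (iv h) k))) else undefined) =
      xdelta H C \<alpha> A D (mul h h') (cmp C (ao (mul h h') A) (ao h B) D u (fm (\<alpha> h) (ao h' A) B u')) k"
  proof (cases "k \<in> H")
    case k: True
    show ?thesis
    proof (cases "k = mul h h'")
      case True
      then have "mul (iv h) k = h'" using g_cancel2[OF h h'] by simp
      then show ?thesis using True k by (simp add: xdelta_def)
    next
      case False
      have j: "mul (iv h) k \<in> H" by (rule hinvmul[OF h k])
      have ne: "mul (iv h) k \<noteq> h'" using False g_cancel1[OF h k] by auto
      have "fm (\<alpha> h) (ao (mul (iv h) k) A) B (zero (Hm (ao (mul (iv h) k) A) B)) = zero (Hm (ao k A) (ao h B))"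
        using lf_zero[OF lc lc afun[OF h] aob[OF j A] B] aok[OF h k A] by simp
      then show ?thesis using k False ne j lc_zeror[OF lc aob[OF k A] aob[OF h B] D u]
        by (simp add: xdelta_def)
    qed
  next
    case False
    then have "k \<noteq> mul h h'" using hmul[OF h h'] by auto
    then show ?thesis using False by (simp add: xdelta_def)
  qed
qed

lemma ide_delta: "ide XC A = xdelta H C \<alpha> A A \<one>\<^bsub>G\<^esub> (ide C A)"
  by (simp add: cross_simps xdelta_def)

end

context msetup begin

definition JJ :: "('z \<times> 'o, 'g \<Rightarrow> 'm, 'z \<times> 'o, 'g \<Rightarrow> 'm) lfunctor" where
  "JJ = \<lparr>fo = (\<lambda>X. X), fm = (\<lambda>X Y f k. if k \<in> carrier G then
      (if fst X = fst Y \<and> k \<in> stab (fst X) then f k else zero (homm C0 (fo (\<alpha> k) X) Y)) else undefined)\<rparr>"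

lemma JJ_fo: "fo JJ X = X" by (simp add: JJ_def)
lemma JJ_fm: "fm JJ X Y f = (\<lambda>k. if k \<in> carrier G then
      (if fst X = fst Y \<and> k \<in> stab (fst X) then f k else zero (homm C0 (fo (\<alpha> k) X) Y)) else undefined)"
  by (simp add: JJ_def)

lemma obD: "(t, a) \<in> ob DD \<longleftrightarrow> t \<in> T \<and> a \<in> ob (Af t)" by (simp add: coprod_ob cross_simps)
lemma homD_eq: "homm DD (t, a) (t, b) = cross_hom G (stab t) (Af t) (restr \<alpha> t) a b"
  by (simp add: coprod_homm cross_simps)
lemma homD_ne: "t \<noteq> t' \<Longrightarrow> homm DD (t, a) (t', b) = zmod"
  by (simp add: coprod_homm)
lemma homX: "homm XC0 A B = cross_hom G (carrier G) C0 \<alpha> A B" by (simp add: cross_simps)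
lemma obX: "ob XC0 = ob C0" by (simp add: cross_simps)

lemma stab_G: "k \<in> stab t \<Longrightarrow> k \<in> carrier G" by (simp add: stab_mem)
lemma pa_stab: "t \<in> Z \<Longrightarrow> k \<in> stab t \<Longrightarrow> a \<in> ob (Af t) \<Longrightarrow> fo (\<alpha> k) (t, a) = (t, fo (restr \<alpha> t k) a)"
  using pair_a[of k t a] by (simp add: stab_mem)
lemma homm0_stab: "t \<in> Z \<Longrightarrow> k \<in> stab t \<Longrightarrow> a \<in> ob (Af t) \<Longrightarrow> homm C0 (fo (\<alpha> k) (t, a)) (t, b) = homm (Af t) (fo (restr \<alpha> t k) a) b"
  by (simp add: pa_stab coprod_homm)
lemma homm0_off: "k \<in> carrier G \<Longrightarrow> t \<in> Z \<Longrightarrow> a \<in> ob (Af t) \<Longrightarrow> \<phi> k t \<noteq> t' \<Longrightarrow> homm C0 (fo (\<alpha> k) (t, a)) (t', b) = zmod"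
  by (simp add: pair_a coprod_homm)
lemma off_T: "t \<in> T \<Longrightarrow> t' \<in> T \<Longrightarrow> t \<noteq> t' \<Longrightarrow> k \<in> carrier G \<Longrightarrow> \<phi> k t \<noteq> t'"
  using rep_unique by blast
lemma stab_off: "k \<in> carrier G \<Longrightarrow> k \<notin> stab t \<Longrightarrow> \<phi> k t \<noteq> t"
  by (simp add: stab_mem)

lemma ob0_a: "k \<in> carrier G \<Longrightarrow> A \<in> ob C0 \<Longrightarrow> fo (\<alpha> k) A \<in> ob C0"
  by (rule lf_ob[OF a_fun])

lemma Jsing:
  assumes t: "t \<in> T" "t' \<in> T" "t \<noteq> t'" and a: "a \<in> ob (Af t)"
    and u: "u \<in> carrier (cross_hom G (carrier G) C0 \<alpha> (t, a) (t', b))"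
  shows "u = (\<lambda>k. undefined)"
proof
  fix k
  show "u k = undefined"
  proof (cases "k \<in> carrier G")
    case True
    have "u k \<in> carrier (homm C0 (fo (\<alpha> k) (t, a)) (t', b))" by (rule xsetup.XH_in[OF xs0 u True])
    then show ?thesis using homm0_off[OF True _ a off_T[OF t True]] t TZ by (auto simp: zmod_simps)
  next
    case False then show ?thesis by (rule xsetup.XH_out[OF xs0 u])
  qed
qed

lemma J_hom:
  assumes t: "t \<in> T" "t' \<in> T" and a: "a \<in> ob (Af t)" and b: "b \<in> ob (Af t')"
    and f: "f \<in> carrier (homm DD (t, a) (t', b))"
  shows "fm JJ (t, a) (t', b) f \<in> carrier (cross_hom G (carrier G) C0 \<alpha> (t, a) (t', b))"
proof (rule xsetup.XH_I[OF xs0])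
  have tZ: "t \<in> Z" "t' \<in> Z" using t TZ by auto
  have A: "(t, a) \<in> ob C0" and B: "(t', b) \<in> ob C0" using tZ a b by (auto simp: ob0)
  fix k assume k: "k \<in> carrier G"
  show "fm JJ (t, a) (t', b) f k \<in> carrier (homm C0 (fo (\<alpha> k) (t, a)) (t', b))"
  proof (cases "t = t' \<and> k \<in> stab t")
    case True
    then have tt: "t' = t" and ks: "k \<in> stab t" by auto
    have "f \<in> carrier (cross_hom G (stab t) (Af t) (restr \<alpha> t) a b)" using f homD_eq tt by auto
    then have fk: "f k \<in> carrier (homm (Af t) (fo (restr \<alpha> t k) a) b)" using xsetup.XH_in[OF xsT[OF tZ(1)]] ks by blast
    have "fm JJ (t, a) (t', b) f k = f k" using k ks tt by (simp add: JJ_fm)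
    then show ?thesis unfolding tt homm0_stab[OF tZ(1) ks a] using fk tt by simp
  next
    case False
    then show ?thesis using k lc_zero[OF lc0 ob0_a[OF k A] B] by (auto simp: JJ_fm)
  qed
next
  fix k assume "k \<notin> carrier G" then show "fm JJ (t, a) (t', b) f k = undefined" by (simp add: JJ_fm)
next
  have tZ: "t \<in> Z" "t' \<in> Z" using t TZ by auto
  show "finite (xsupp (carrier G) C0 \<alpha> (t, a) (t', b) (fm JJ (t, a) (t', b) f))"
  proof (cases "t = t'")
    case True
    have fX: "f \<in> carrier (cross_hom G (stab t) (Af t) (restr \<alpha> t) a b)" using f True homD_eq by auto
    have "xsupp (carrier G) C0 \<alpha> (t, a) (t', b) (fm JJ (t, a) (t', b) f) \<subseteq> xsupp (stab t) (Af t) (restr \<alpha> t) a b f"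
      using True homm0_stab[OF tZ(1) _ a] by (auto simp: xsupp_def JJ_fm stab_G)
    then show ?thesis using xsetup.XH_fin[OF xsT[OF tZ(1)] fX] finite_subset by blast
  next
    case False
    then show ?thesis by (simp add: xsupp_def JJ_fm)
  qed
qed

lemma J_faith:
  assumes t: "t \<in> T" "t' \<in> T" and a: "a \<in> ob (Af t)" and b: "b \<in> ob (Af t')"
  shows "inj_on (fm JJ (t, a) (t', b)) (carrier (homm DD (t, a) (t', b)))"
proof (cases "t = t'")
  case True
  have tZ: "t \<in> Z" using t TZ by auto
  show ?thesis
  proof (rule inj_onI)
    fix f f' assume f: "f \<in> carrier (homm DD (t, a) (t', b))" and f': "f' \<in> carrier (homm DD (t, a) (t', b))"
      and eq: "fm JJ (t, a) (t', b) f = fm JJ (t, a) (t', b) f'"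
    have fX: "f \<in> carrier (cross_hom G (stab t) (Af t) (restr \<alpha> t) a b)" using f True homD_eq by auto
    have fX': "f' \<in> carrier (cross_hom G (stab t) (Af t) (restr \<alpha> t) a b)" using f' True homD_eq by auto
    show "f = f'"
    proof
      fix k
      show "f k = f' k"
      proof (cases "k \<in> stab t")
        case True
        then show ?thesis using fun_cong[OF eq, of k] \<open>t = t'\<close> stab_G by (simp add: JJ_fm)
      next
        case False
        then show ?thesis using xsetup.XH_out[OF xsT[OF tZ] fX] xsetup.XH_out[OF xsT[OF tZ] fX'] by simp
      qed
    qed
  qed
next
  case False
  then show ?thesis by (simp add: homD_ne zmod_simps)
qed

lemma J_ide:
  assumes t: "t \<in> T" and a: "a \<in> ob (Af t)"
  shows "fm JJ (t, a) (t, a) (ide DD (t, a)) = ide XC0 (t, a)"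
proof
  have tZ: "t \<in> Z" using t TZ by auto
  have one: "\<one>\<^bsub>G\<^esub> \<in> stab t" by (rule xsetup.h1[OF xsT[OF tZ]])
  fix k
  show "fm JJ (t, a) (t, a) (ide DD (t, a)) k = ide XC0 (t, a) k"
  proof (cases "k \<in> stab t")
    case True
    then show ?thesis using homm0_stab[OF tZ True a] stab_G[OF True]
      by (simp add: JJ_fm coprod_ide cross_simps)
  next
    case False
    then have "k \<noteq> \<one>\<^bsub>G\<^esub>" using one by auto
    then show ?thesis using False by (simp add: JJ_fm coprod_ide cross_simps)
  qed
qed

end

context msetup begin

lemma obD_cases: assumes "A \<in> ob DD" obtains t a where "A = (t, a)" "t \<in> T" "a \<in> ob (Af t)" "t \<in> Z"
  using assms TZ by (cases A) (auto simp: obD)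

lemma J_add:
  assumes t: "t \<in> T" "t' \<in> T" and a: "a \<in> ob (Af t)" and b: "b \<in> ob (Af t')"
    and f: "f \<in> carrier (homm DD (t, a) (t', b))" and f': "f' \<in> carrier (homm DD (t, a) (t', b))"
  shows "fm JJ (t, a) (t', b) (add (homm DD (t, a) (t', b)) f f') =
     add (cross_hom G (carrier G) C0 \<alpha> (t, a) (t', b)) (fm JJ (t, a) (t', b) f) (fm JJ (t, a) (t', b) f')"
proof (cases "t = t'")
  case True
  have tZ: "t \<in> Z" using t TZ by auto
  show ?thesis unfolding True[symmetric]
  proof
    fix k
    show "fm JJ (t, a) (t, b) (add (homm DD (t, a) (t, b)) f f') k =
      add (cross_hom G (carrier G) C0 \<alpha> (t, a) (t, b)) (fm JJ (t, a) (t, b) f) (fm JJ (t, a) (t, b) f') k"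
    proof (cases "k \<in> stab t")
      case True
      then show ?thesis using homm0_stab[OF tZ True a] stab_G[OF True]
        by (simp add: JJ_fm homD_eq cross_hom_simps(3))
    next
      case False
      show ?thesis
      proof (cases "k \<in> carrier G")
        case True
        then show ?thesis using False homm0_off[OF True tZ a stab_off[OF True False]]
          by (simp add: JJ_fm cross_hom_simps(3) zmod_simps)
      next
        case False then show ?thesis by (simp add: JJ_fm cross_hom_simps(3))
      qed
    qed
  qed
next
  case False
  have tZ: "t \<in> Z" "t' \<in> Z" using t TZ by auto
  have A: "(t, a) \<in> ob C0" and B: "(t', b) \<in> ob C0" using tZ a b by (auto simp: ob0)
  have c: "add (homm DD (t, a) (t', b)) f f' \<in> carrier (homm DD (t, a) (t', b))"
    using False by (simp add: homD_ne zmod_simps)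
  show ?thesis
    using Jsing[OF t False a J_hom[OF t a b c]]
      Jsing[OF t False a xsetup.XH_add[OF xs0 A B J_hom[OF t a b f] J_hom[OF t a b f']]] by simp
qed

lemma J_smult:
  assumes t: "t \<in> T" "t' \<in> T" and a: "a \<in> ob (Af t)" and b: "b \<in> ob (Af t')"
    and f: "f \<in> carrier (homm DD (t, a) (t', b))" and r: "r \<in> carrier R"
  shows "fm JJ (t, a) (t', b) (smult (homm DD (t, a) (t', b)) r f) =
     smult (cross_hom G (carrier G) C0 \<alpha> (t, a) (t', b)) r (fm JJ (t, a) (t', b) f)"
proof (cases "t = t'")
  case True
  have tZ: "t \<in> Z" using t TZ by auto
  show ?thesis unfolding True[symmetric]
  proof
    fix k
    show "fm JJ (t, a) (t, b) (smult (homm DD (t, a) (t, b)) r f) k =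
      smult (cross_hom G (carrier G) C0 \<alpha> (t, a) (t, b)) r (fm JJ (t, a) (t, b) f) k"
    proof (cases "k \<in> stab t")
      case True
      then show ?thesis using homm0_stab[OF tZ True a] stab_G[OF True]
        by (simp add: JJ_fm homD_eq cross_hom_simps(4))
    next
      case False
      show ?thesis
      proof (cases "k \<in> carrier G")
        case True
        then show ?thesis using False homm0_off[OF True tZ a stab_off[OF True False]]
          by (simp add: JJ_fm cross_hom_simps(4) zmod_simps)
      next
        case False then show ?thesis by (simp add: JJ_fm cross_hom_simps(4))
      qed
    qed
  qed
next
  case False
  have tZ: "t \<in> Z" "t' \<in> Z" using t TZ by auto
  have A: "(t, a) \<in> ob C0" and B: "(t', b) \<in> ob C0" using tZ a b by (auto simp: ob0)
  have c: "smult (homm DD (t, a) (t', b)) r f \<in> carrier (homm DD (t, a) (t', b))"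
    using False by (simp add: homD_ne zmod_simps)
  show ?thesis
    using Jsing[OF t False a J_hom[OF t a b c]]
      Jsing[OF t False a xsetup.XH_smult[OF xs0 A B J_hom[OF t a b f] r]] by simp
qed

lemma J_cmp_same:
  assumes t: "t \<in> T" and a: "a \<in> ob (Af t)" and b: "b \<in> ob (Af t)" and c: "c \<in> ob (Af t)"
    and f: "f \<in> carrier (cross_hom G (stab t) (Af t) (restr \<alpha> t) a b)"
    and g: "g \<in> carrier (cross_hom G (stab t) (Af t) (restr \<alpha> t) b c)"
  shows "fm JJ (t, a) (t, c) (cmp (cross G (stab t) (Af t) (restr \<alpha> t)) a b c g f) =
     cmp XC0 (t, a) (t, b) (t, c) (fm JJ (t, b) (t, c) g) (fm JJ (t, a) (t, b) f)"
proof
  fix k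
  have tZ: "t \<in> Z" using t TZ by auto
  have A: "(t, a) \<in> ob C0" and B: "(t, b) \<in> ob C0" and Cc: "(t, c) \<in> ob C0" using tZ a b c by (auto simp: ob0)
  have Jf: "fm JJ (t, a) (t, b) f \<in> carrier (cross_hom G (carrier G) C0 \<alpha> (t, a) (t, b))"
    by (rule J_hom[OF t t a b]) (simp add: homD_eq f)
  have Jg: "fm JJ (t, b) (t, c) g \<in> carrier (cross_hom G (carrier G) C0 \<alpha> (t, b) (t, c))"
    by (rule J_hom[OF t t b c]) (simp add: homD_eq g)
  show "fm JJ (t, a) (t, c) (cmp (cross G (stab t) (Af t) (restr \<alpha> t)) a b c g f) k =
     cmp XC0 (t, a) (t, b) (t, c) (fm JJ (t, b) (t, c) g) (fm JJ (t, a) (t, b) f) k"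
  proof (cases "k \<in> stab t")
    case True
    have kG: "k \<in> carrier G" by (rule stab_G[OF True])
    have sp: "xsupp (carrier G) C0 \<alpha> (t, b) (t, c) (fm JJ (t, b) (t, c) g) = xsupp (stab t) (Af t) (restr \<alpha> t) b c g"
    proof (rule Set.set_eqI)
      fix x
      show "x \<in> xsupp (carrier G) C0 \<alpha> (t, b) (t, c) (fm JJ (t, b) (t, c) g) \<longleftrightarrow> x \<in> xsupp (stab t) (Af t) (restr \<alpha> t) b c g"
      proof (cases "x \<in> stab t")
        case True
        then show ?thesis using homm0_stab[OF tZ True b] stab_G[OF True] by (simp add: xsupp_def JJ_fm)
      next
        case False
        then show ?thesis by (simp add: xsupp_def JJ_fm)
      qed
    qed
    have "fm JJ (t, a) (t, c) (cmp (cross G (stab t) (Af t) (restr \<alpha> t)) a b c g f) k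
        = finsum (homm (Af t) (fo (restr \<alpha> t k) a) c) (xtrm G (Af t) (restr \<alpha> t) a b c g f k) (xsupp (stab t) (Af t) (restr \<alpha> t) b c g)"
      using True kG by (simp add: JJ_fm cross_simps(3))
    also have "\<dots> = finsum (homm C0 (fo (\<alpha> k) (t, a)) (t, c)) (xtrm G C0 \<alpha> (t, a) (t, b) (t, c) (fm JJ (t, b) (t, c) g) (fm JJ (t, a) (t, b) f) k)
        (xsupp (carrier G) C0 \<alpha> (t, b) (t, c) (fm JJ (t, b) (t, c) g))"
      unfolding sp homm0_stab[OF tZ True a]
    proof (rule abelian_monoid.finsum_cong'[OF lc_am[OF lAf[rule_format, OF tZ] r_ob[OF kG tZ a, unfolded stab_mem[THEN iffD1, OF True, THEN conjunct2]] c]])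
      show "xtrm G C0 \<alpha> (t, a) (t, b) (t, c) (fm JJ (t, b) (t, c) g) (fm JJ (t, a) (t, b) f) k \<in> xsupp (stab t) (Af t) (restr \<alpha> t) b c g \<rightarrow> carrier (homm (Af t) (fo (restr \<alpha> t k) a) c)"
      proof
        fix x assume "x \<in> xsupp (stab t) (Af t) (restr \<alpha> t) b c g"
        then have x: "x \<in> stab t" by (simp add: xsupp_def)
        have "xtrm G C0 \<alpha> (t, a) (t, b) (t, c) (fm JJ (t, b) (t, c) g) (fm JJ (t, a) (t, b) f) k x \<in> carrier (homm C0 (fo (\<alpha> k) (t, a)) (t, c))"
          by (rule xsetup.trm_closed[OF xs0 A B Cc Jg Jf kG stab_G[OF x]])
        then show "xtrm G C0 \<alpha> (t, a) (t, b) (t, c) (fm JJ (t, b) (t, c) g) (fm JJ (t, a) (t, b) f) k x \<in> carrier (homm (Af t) (fo (restr \<alpha> t k) a) c)"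
          unfolding homm0_stab[OF tZ True a] .
      qed
      fix x assume "x \<in> xsupp (stab t) (Af t) (restr \<alpha> t) b c g"
      then have x: "x \<in> stab t" by (simp add: xsupp_def)
      have j: "inv\<^bsub>G\<^esub> x \<otimes>\<^bsub>G\<^esub> k \<in> stab t" by (rule xsetup.hinvmul[OF xsT[OF tZ] x True])
      show "xtrm G (Af t) (restr \<alpha> t) a b c g f k x = xtrm G C0 \<alpha> (t, a) (t, b) (t, c) (fm JJ (t, b) (t, c) g) (fm JJ (t, a) (t, b) f) k x"
        using x j True stab_G[OF x] stab_G[OF j] kG
        by (simp add: xtrm_def JJ_fm pa_stab[OF tZ _ a] pa_stab[OF tZ _ b] coprod_cmp_eq restr_fm)
    qed simp
    also have "\<dots> = cmp XC0 (t, a) (t, b) (t, c) (fm JJ (t, b) (t, c) g) (fm JJ (t, a) (t, b) f) k"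
      by (rule cross_simps(3)[OF kG, symmetric])
    finally show ?thesis .
  next
    case False
    show ?thesis
    proof (cases "k \<in> carrier G")
      case True
      have z: "homm C0 (fo (\<alpha> k) (t, a)) (t, c) = zmod" by (rule homm0_off[OF True tZ a stab_off[OF True False]])
      have "cmp XC0 (t, a) (t, b) (t, c) (fm JJ (t, b) (t, c) g) (fm JJ (t, a) (t, b) f) k \<in> carrier (homm C0 (fo (\<alpha> k) (t, a)) (t, c))"
        by (rule xsetup.XH_in[OF xs0 xsetup.cmp_closed[OF xs0 A B Cc Jg Jf] True])
      then show ?thesis using True False z by (simp add: JJ_fm zmod_simps)
    next
      case False
      then show ?thesis by (simp add: JJ_fm cross_simps(4))
    qed
  qed
qed

lemma J_cmp:
  assumes t: "t \<in> T" "t' \<in> T" "t'' \<in> T" and a: "a \<in> ob (Af t)" and b: "b \<in> ob (Af t')" and c: "c \<in> ob (Af t'')"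
    and f: "f \<in> carrier (homm DD (t, a) (t', b))" and g: "g \<in> carrier (homm DD (t', b) (t'', c))"
  shows "fm JJ (t, a) (t'', c) (cmp DD (t, a) (t', b) (t'', c) g f) =
     cmp XC0 (t, a) (t', b) (t'', c) (fm JJ (t', b) (t'', c) g) (fm JJ (t, a) (t', b) f)"
proof -
  have tZ: "t \<in> Z" "t' \<in> Z" "t'' \<in> Z" using t TZ by auto
  have A: "(t, a) \<in> ob C0" and B: "(t', b) \<in> ob C0" and Cc: "(t'', c) \<in> ob C0" using tZ a b c by (auto simp: ob0)
  have Jf: "fm JJ (t, a) (t', b) f \<in> carrier (cross_hom G (carrier G) C0 \<alpha> (t, a) (t', b))" by (rule J_hom[OF t(1,2) a b f])
  have Jg: "fm JJ (t', b) (t'', c) g \<in> carrier (cross_hom G (carrier G) C0 \<alpha> (t', b) (t'', c))" by (rule J_hom[OF t(2,3) b c g])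
  show ?thesis
  proof (cases "t = t'' ")
    case False
    have oA: "(t, a) \<in> ob DD" and oB: "(t', b) \<in> ob DD" and oC: "(t'', c) \<in> ob DD" using t a b c by (auto simp: obD)
    have c1: "cmp DD (t, a) (t', b) (t'', c) g f \<in> carrier (homm DD (t, a) (t'', c))"
      by (rule lc_cmp[OF lcD oA oB oC f g])
    show ?thesis
      using Jsing[OF t(1,3) False a J_hom[OF t(1,3) a c c1]]
        Jsing[OF t(1,3) False a xsetup.cmp_closed[OF xs0 A B Cc Jg Jf]] by simp
  next
    case True
    show ?thesis
    proof (cases "t' = t")
      case True
      have f': "f \<in> carrier (cross_hom G (stab t) (Af t) (restr \<alpha> t) a b)" using f True homD_eq by metis
      have g': "g \<in> carrier (cross_hom G (stab t) (Af t) (restr \<alpha> t) b c)" using g True \<open>t = t''\<close> homD_eq by metis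
      have b': "b \<in> ob (Af t)" and c': "c \<in> ob (Af t)" using b c True \<open>t = t''\<close> by auto
      show ?thesis unfolding True \<open>t = t''\<close>[symmetric] coprod_cmp_eq
        using J_cmp_same[OF t(1) a b' c' f' g'] by (simp add: cross_simps)
    next
      case False
      show ?thesis unfolding \<open>t = t''\<close>[symmetric]
      proof
        fix k
        have Jg0: "fm JJ (t', b) (t, c) g x = zero (homm C0 (fo (\<alpha> x) (t', b)) (t, c))" if "x \<in> carrier G" for x
          using that False by (simp add: JJ_fm)
        have esp: "xsupp (carrier G) C0 \<alpha> (t', b) (t, c) (fm JJ (t', b) (t, c) g) = {}"
          using Jg0 by (auto simp: xsupp_def)
        show "fm JJ (t, a) (t, c) (cmp DD (t, a) (t', b) (t, c) g f) k =
            cmp XC0 (t, a) (t', b) (t, c) (fm JJ (t', b) (t, c) g) (fm JJ (t, a) (t', b) f) k"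
        proof (cases "k \<in> carrier G")
          case kG: True
          have rhs: "cmp XC0 (t, a) (t', b) (t, c) (fm JJ (t', b) (t, c) g) (fm JJ (t, a) (t', b) f) k = zero (homm C0 (fo (\<alpha> k) (t, a)) (t, c))"
            unfolding cross_simps(3)[OF kG] esp
            using abelian_monoid.finsum_empty[OF lc_am[OF lc0 ob0_a[OF kG A]], of "(t, c)"] Cc \<open>t = t''\<close> by simp
          show ?thesis
          proof (cases "k \<in> stab t")
            case True
            then show ?thesis using rhs kG homm0_stab[OF tZ(1) True a] False
              by (simp add: JJ_fm coprod_cmp_mid cross_simps cross_hom_simps(2))
          next
            case False
            then show ?thesis using rhs kG \<open>t' \<noteq> t\<close> by (simp add: JJ_fm coprod_cmp_mid)
          qed
        next
          case False
          then show ?thesis by (simp add: JJ_fm cross_simps(4))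
        qed
      qed
    qed
  qed
qed

lemma Jfun: "lin_functor R DD XC0 JJ"
  unfolding lin_functor_def JJ_fo
proof (intro conjI ballI)
  fix A assume "A \<in> ob DD"
  then obtain t a where A: "A = (t, a)" "t \<in> T" "a \<in> ob (Af t)" "t \<in> Z" by (rule obD_cases)
  show "A \<in> ob XC0" using A by (simp add: obX ob0)
  show "fm JJ A A (ide DD A) = ide XC0 A" unfolding A(1) by (rule J_ide[OF A(2,3)])
next
  fix A B f assume "A \<in> ob DD" "B \<in> ob DD" and f: "f \<in> carrier (homm DD A B)"
  moreover obtain t a where A: "A = (t, a)" "t \<in> T" "a \<in> ob (Af t)" "t \<in> Z" using \<open>A \<in> ob DD\<close> by (rule obD_cases)
  moreover obtain t' b where B: "B = (t', b)" "t' \<in> T" "b \<in> ob (Af t')" "t' \<in> Z" using \<open>B \<in> ob DD\<close> by (rule obD_cases)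
  ultimately show "fm JJ A B f \<in> carrier (homm XC0 A B)" using J_hom homX by simp
next
  fix A B E f g assume "A \<in> ob DD" "B \<in> ob DD" "E \<in> ob DD" and f: "f \<in> carrier (homm DD A B)" and g: "g \<in> carrier (homm DD B E)"
  obtain t a where A: "A = (t, a)" "t \<in> T" "a \<in> ob (Af t)" "t \<in> Z" using \<open>A \<in> ob DD\<close> by (rule obD_cases)
  obtain t' b where B: "B = (t', b)" "t' \<in> T" "b \<in> ob (Af t')" "t' \<in> Z" using \<open>B \<in> ob DD\<close> by (rule obD_cases)
  obtain t'' c where E: "E = (t'', c)" "t'' \<in> T" "c \<in> ob (Af t'')" "t'' \<in> Z" using \<open>E \<in> ob DD\<close> by (rule obD_cases)
  show "fm JJ A E (cmp DD A B E g f) = cmp XC0 A B E (fm JJ B E g) (fm JJ A B f)"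
    using J_cmp[OF A(2) B(2) E(2) A(3) B(3) E(3)] f g A(1) B(1) E(1) by simp
next
  fix A B f f' assume "A \<in> ob DD" "B \<in> ob DD" and f: "f \<in> carrier (homm DD A B)" and f': "f' \<in> carrier (homm DD A B)"
  obtain t a where A: "A = (t, a)" "t \<in> T" "a \<in> ob (Af t)" "t \<in> Z" using \<open>A \<in> ob DD\<close> by (rule obD_cases)
  obtain t' b where B: "B = (t', b)" "t' \<in> T" "b \<in> ob (Af t')" "t' \<in> Z" using \<open>B \<in> ob DD\<close> by (rule obD_cases)
  show "fm JJ A B (add (homm DD A B) f f') = add (homm XC0 A B) (fm JJ A B f) (fm JJ A B f')"
    using J_add[OF A(2) B(2) A(3) B(3)] f f' A(1) B(1) homX by simp
next
  fix A B f f' r assume "A \<in> ob DD" "B \<in> ob DD" and f: "f \<in> carrier (homm DD A B)" and f': "f' \<in> carrier (homm DD A B)"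
    and r: "r \<in> carrier R"
  obtain t a where A: "A = (t, a)" "t \<in> T" "a \<in> ob (Af t)" "t \<in> Z" using \<open>A \<in> ob DD\<close> by (rule obD_cases)
  obtain t' b where B: "B = (t', b)" "t' \<in> T" "b \<in> ob (Af t')" "t' \<in> Z" using \<open>B \<in> ob DD\<close> by (rule obD_cases)
  show "fm JJ A B (smult (homm DD A B) r f) = smult (homm XC0 A B) r (fm JJ A B f)"
    using J_smult[OF A(2) B(2) A(3) B(3) _ r] f A(1) B(1) homX by simp
qed

end

context msetup begin

definition PP :: "'z \<times> 'o \<Rightarrow> 'z \<times> 'o" where "PP A = fo (\<alpha> (gz (fst A))) A"
definition ee :: "'z \<times> 'o \<Rightarrow> 'g \<Rightarrow> 'm" where
  "ee A = xdelta (carrier G) C0 \<alpha> A (PP A) (gz (fst A)) (ide C0 (PP A))"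
definition ee' :: "'z \<times> 'o \<Rightarrow> 'g \<Rightarrow> 'm" where
  "ee' A = xdelta (carrier G) C0 \<alpha> (PP A) A (inv\<^bsub>G\<^esub> (gz (fst A))) (ide C0 A)"

lemma ob0_cases: assumes "A \<in> ob C0" obtains z a where "A = (z, a)" "z \<in> Z" "a \<in> ob (Af z)"
  using assms by (cases A) (auto simp: ob0)

lemma gzA: "A \<in> ob C0 \<Longrightarrow> gz (fst A) \<in> carrier G"
  by (erule ob0_cases) (simp add: gz_prop)

lemma PP_form: assumes z: "z \<in> Z" and a: "a \<in> ob (Af z)" shows "PP (z, a) = (tz z, fo (restr \<alpha> z (gz z)) a)"
  unfolding PP_def using pair_a[OF gz_prop(1)[OF z] z a] gz_prop(2)[OF z] by simp

lemma PP_obD: assumes "A \<in> ob C0" shows "PP A \<in> ob DD"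
proof -
  obtain z a where A: "A = (z, a)" "z \<in> Z" "a \<in> ob (Af z)" using assms by (rule ob0_cases)
  show ?thesis unfolding A(1) PP_form[OF A(2,3)] obD
    using tz_prop[OF A(2)] r_ob[OF gz_prop(1)[OF A(2)] A(2,3)] gz_prop(2)[OF A(2)] by simp
qed

lemma PP_ob0: "A \<in> ob C0 \<Longrightarrow> PP A \<in> ob C0"
  unfolding PP_def by (rule ob0_a[OF gzA])

lemma PP_J: assumes "X \<in> ob DD" shows "PP X = X"
proof -
  obtain t a where X: "X = (t, a)" "t \<in> T" "a \<in> ob (Af t)" "t \<in> Z" using assms by (rule obD_cases)
  show ?thesis unfolding PP_def X(1) using gz_T[OF X(2)] a_1o[of "(t, a)"] X by (simp add: ob0)
qed

lemma inv_act: assumes "g \<in> carrier G" "A \<in> ob C0" shows "fo (\<alpha> (inv\<^bsub>G\<^esub> g)) (fo (\<alpha> g) A) = A"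
proof -
  have "inv\<^bsub>G\<^esub> g \<otimes>\<^bsub>G\<^esub> g = \<one>\<^bsub>G\<^esub>" using grp assms(1) by (simp add: group.l_inv)
  then show ?thesis using a_mo[OF group.inv_closed[OF grp assms(1)] assms(1) assms(2)] a_1o[OF assms(2)] by simp
qed
lemma inv_act2: assumes "g \<in> carrier G" "A \<in> ob C0" shows "fo (\<alpha> g) (fo (\<alpha> (inv\<^bsub>G\<^esub> g)) A) = A"
proof -
  have "g \<otimes>\<^bsub>G\<^esub> inv\<^bsub>G\<^esub> g = \<one>\<^bsub>G\<^esub>" using grp assms(1) by (simp add: group.r_inv)
  then show ?thesis using a_mo[OF assms(1) group.inv_closed[OF grp assms(1)] assms(2)] a_1o[OF assms(2)] by simp
qed

lemma ee_closed: assumes A: "A \<in> ob C0" shows "ee A \<in> carrier (cross_hom G (carrier G) C0 \<alpha> A (PP A))"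
  unfolding ee_def
  by (rule xsetup.delta_closed[OF xs0 A PP_ob0[OF A] gzA[OF A]]) (simp add: PP_def[symmetric] lc_ide[OF lc0 PP_ob0[OF A]])

lemma ee'_closed: assumes A: "A \<in> ob C0" shows "ee' A \<in> carrier (cross_hom G (carrier G) C0 \<alpha> (PP A) A)"
  unfolding ee'_def
  by (rule xsetup.delta_closed[OF xs0 PP_ob0[OF A] A group.inv_closed[OF grp gzA[OF A]]])
     (simp add: PP_def inv_act[OF gzA[OF A] A] lc_ide[OF lc0 A])

lemma ee_inv1: assumes A: "A \<in> ob C0" shows "cmp XC0 A (PP A) A (ee' A) (ee A) = ide XC0 A"
proof -
  let ?g = "gz (fst A)"
  have g: "?g \<in> carrier G" by (rule gzA[OF A])
  have ig: "inv\<^bsub>G\<^esub> ?g \<in> carrier G" by (rule group.inv_closed[OF grp g])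
  have P: "PP A \<in> ob C0" by (rule PP_ob0[OF A])
  have e1: "fo (\<alpha> ?g) A = PP A" by (simp add: PP_def)
  have e2: "fo (\<alpha> (inv\<^bsub>G\<^esub> ?g)) (PP A) = A" unfolding e1[symmetric] by (rule inv_act[OF g A])
  have e3: "inv\<^bsub>G\<^esub> ?g \<otimes>\<^bsub>G\<^esub> ?g = \<one>\<^bsub>G\<^esub>" using grp g by (simp add: group.l_inv)
  have u: "ide C0 A \<in> carrier (homm C0 (fo (\<alpha> (inv\<^bsub>G\<^esub> ?g)) (PP A)) A)" unfolding e2 by (rule lc_ide[OF lc0 A])
  have u': "ide C0 (PP A) \<in> carrier (homm C0 (fo (\<alpha> ?g) A) (PP A))" unfolding e1 by (rule lc_ide[OF lc0 P])
  have "cmp XC0 A (PP A) A (ee' A) (ee A) = xdelta (carrier G) C0 \<alpha> A A (inv\<^bsub>G\<^esub> ?g \<otimes>\<^bsub>G\<^esub> ?g)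
      (cmp C0 (fo (\<alpha> (inv\<^bsub>G\<^esub> ?g \<otimes>\<^bsub>G\<^esub> ?g)) A) (fo (\<alpha> (inv\<^bsub>G\<^esub> ?g)) (PP A)) A (ide C0 A)
         (fm (\<alpha> (inv\<^bsub>G\<^esub> ?g)) (fo (\<alpha> ?g) A) (PP A) (ide C0 (PP A))))"
    unfolding ee_def ee'_def by (rule xsetup.delta_delta[OF xs0 A P A ig g u u'])
  also have "\<dots> = xdelta (carrier G) C0 \<alpha> A A \<one>\<^bsub>G\<^esub> (ide C0 A)"
    unfolding e3 e1 e2 a_1o[OF A] lf_ide[OF a_fun[OF ig] P] e2 lc_idl[OF lc0 A A lc_ide[OF lc0 A]] ..
  also have "\<dots> = ide XC0 A" by (rule xsetup.ide_delta[OF xs0, symmetric])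
  finally show ?thesis .
qed

lemma ee_inv2: assumes A: "A \<in> ob C0" shows "cmp XC0 (PP A) A (PP A) (ee A) (ee' A) = ide XC0 (PP A)"
proof -
  let ?g = "gz (fst A)"
  have g: "?g \<in> carrier G" by (rule gzA[OF A])
  have ig: "inv\<^bsub>G\<^esub> ?g \<in> carrier G" by (rule group.inv_closed[OF grp g])
  have P: "PP A \<in> ob C0" by (rule PP_ob0[OF A])
  have e1: "fo (\<alpha> ?g) A = PP A" by (simp add: PP_def)
  have e2: "fo (\<alpha> (inv\<^bsub>G\<^esub> ?g)) (PP A) = A" unfolding e1[symmetric] by (rule inv_act[OF g A])
  have e3: "?g \<otimes>\<^bsub>G\<^esub> inv\<^bsub>G\<^esub> ?g = \<one>\<^bsub>G\<^esub>" using grp g by (simp add: group.r_inv)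
  have u: "ide C0 A \<in> carrier (homm C0 (fo (\<alpha> (inv\<^bsub>G\<^esub> ?g)) (PP A)) A)" unfolding e2 by (rule lc_ide[OF lc0 A])
  have u': "ide C0 (PP A) \<in> carrier (homm C0 (fo (\<alpha> ?g) A) (PP A))" unfolding e1 by (rule lc_ide[OF lc0 P])
  have "cmp XC0 (PP A) A (PP A) (ee A) (ee' A) = xdelta (carrier G) C0 \<alpha> (PP A) (PP A) (?g \<otimes>\<^bsub>G\<^esub> inv\<^bsub>G\<^esub> ?g)
      (cmp C0 (fo (\<alpha> (?g \<otimes>\<^bsub>G\<^esub> inv\<^bsub>G\<^esub> ?g)) (PP A)) (fo (\<alpha> ?g) A) (PP A) (ide C0 (PP A))
         (fm (\<alpha> ?g) (fo (\<alpha> (inv\<^bsub>G\<^esub> ?g)) (PP A)) A (ide C0 A)))"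
    unfolding ee_def ee'_def by (rule xsetup.delta_delta[OF xs0 P A P g ig u' u])
  also have "\<dots> = xdelta (carrier G) C0 \<alpha> (PP A) (PP A) \<one>\<^bsub>G\<^esub> (ide C0 (PP A))"
    unfolding e3 e1 e2 a_1o[OF P] lf_ide[OF a_fun[OF g] A] e1 lc_idl[OF lc0 P P lc_ide[OF lc0 P]] ..
  also have "\<dots> = ide XC0 (PP A)" by (rule xsetup.ide_delta[OF xs0, symmetric])
  finally show ?thesis .
qed

lemma ee_J: assumes X: "X \<in> ob DD" shows "ee X = ide XC0 X"
proof -
  obtain t a where Xe: "X = (t, a)" "t \<in> T" "a \<in> ob (Af t)" "t \<in> Z" using X by (rule obD_cases)
  show ?thesis unfolding ee_def PP_J[OF X] using gz_T[OF Xe(2)] Xe(1) xsetup.ide_delta[OF xs0] by simp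
qed

lemma full_gen:
  assumes t: "t \<in> T" "t' \<in> T" and a: "a \<in> ob (Af t)" and b: "b \<in> ob (Af t')"
    and X: "X \<in> carrier (cross_hom G (carrier G) C0 \<alpha> (t, a) (t', b))"
  shows "\<exists>d\<in>carrier (homm DD (t, a) (t', b)). fm JJ (t, a) (t', b) d = X"
proof (cases "t = t'")
  case True
  have tZ: "t \<in> Z" using t TZ by auto
  define d where "d = (\<lambda>k. if k \<in> stab t then X k else undefined)"
  have dc: "d \<in> carrier (cross_hom G (stab t) (Af t) (restr \<alpha> t) a b)"
  proof (rule xsetup.XH_I[OF xsT[OF tZ]])
    fix k assume k: "k \<in> stab t"
    show "d k \<in> carrier (homm (Af t) (fo (restr \<alpha> t k) a) b)"
      using xsetup.XH_in[OF xs0 X stab_G[OF k]] homm0_stab[OF tZ k a] k True by (simp add: d_def)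
  next
    fix k assume "k \<notin> stab t" then show "d k = undefined" by (simp add: d_def)
  next
    have "xsupp (stab t) (Af t) (restr \<alpha> t) a b d \<subseteq> xsupp (carrier G) C0 \<alpha> (t, a) (t', b) X"
      using homm0_stab[OF tZ _ a] True by (auto simp: xsupp_def d_def stab_G)
    then show "finite (xsupp (stab t) (Af t) (restr \<alpha> t) a b d)"
      using xsetup.XH_fin[OF xs0 X] finite_subset by blast
  qed
  have "fm JJ (t, a) (t', b) d = X"
  proof
    fix k
    show "fm JJ (t, a) (t', b) d k = X k"
    proof (cases "k \<in> carrier G")
      case kG: True
      show ?thesis
      proof (cases "k \<in> stab t")
        case True then show ?thesis using kG \<open>t = t'\<close> by (simp add: JJ_fm d_def)
      next
        case False
        have z: "homm C0 (fo (\<alpha> k) (t, a)) (t', b) = zmod"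
          using homm0_off[OF kG tZ a stab_off[OF kG False]] True by simp
        have "X k \<in> carrier (homm C0 (fo (\<alpha> k) (t, a)) (t', b))" by (rule xsetup.XH_in[OF xs0 X kG])
        then show ?thesis using z kG False by (simp add: JJ_fm zmod_simps)
      qed
    next
      case False then show ?thesis using xsetup.XH_out[OF xs0 X False] by (simp add: JJ_fm)
    qed
  qed
  moreover have "d \<in> carrier (homm DD (t, a) (t', b))" using dc True by (simp add: homD_eq)
  ultimately show ?thesis by blast
next
  case False
  have c: "undefined \<in> carrier (homm DD (t, a) (t', b))" using False by (simp add: homD_ne zmod_simps)
  have "fm JJ (t, a) (t', b) undefined = X"
    using Jsing[OF t False a J_hom[OF t a b c]] Jsing[OF t False a X] by simp
  then show ?thesis using c by blast
qed

theorem main: "lincat_equiv R XC0 DD"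
proof (rule equiv_criterion[where J = JJ and P = PP and e = ee and e' = ee'])
  show "lincat R XC0" by (rule lcX)
  show "lincat R DD" by (rule lcD)
  show "lin_functor R DD XC0 JJ" by (rule Jfun)
  fix X Y assume X: "X \<in> ob DD" and Y: "Y \<in> ob DD"
  obtain t a where Xe: "X = (t, a)" "t \<in> T" "a \<in> ob (Af t)" "t \<in> Z" using X by (rule obD_cases)
  obtain t' b where Ye: "Y = (t', b)" "t' \<in> T" "b \<in> ob (Af t')" "t' \<in> Z" using Y by (rule obD_cases)
  show "inj_on (fm JJ X Y) (carrier (homm DD X Y))" unfolding Xe(1) Ye(1) by (rule J_faith[OF Xe(2) Ye(2) Xe(3) Ye(3)])
next
  fix A assume A: "A \<in> ob XC0"
  then have A0: "A \<in> ob C0" by (simp add: obX)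
  show "PP A \<in> ob DD" by (rule PP_obD[OF A0])
  show "ee A \<in> carrier (homm XC0 A (fo JJ (PP A)))" unfolding JJ_fo homX by (rule ee_closed[OF A0])
  show "ee' A \<in> carrier (homm XC0 (fo JJ (PP A)) A)" unfolding JJ_fo homX by (rule ee'_closed[OF A0])
  show "cmp XC0 A (fo JJ (PP A)) A (ee' A) (ee A) = ide XC0 A" unfolding JJ_fo by (rule ee_inv1[OF A0])
  show "cmp XC0 (fo JJ (PP A)) A (fo JJ (PP A)) (ee A) (ee' A) = ide XC0 (fo JJ (PP A))" unfolding JJ_fo by (rule ee_inv2[OF A0])
next
  fix A B f assume A: "A \<in> ob XC0" and B: "B \<in> ob XC0" and f: "f \<in> carrier (homm XC0 A B)"
  have A0: "A \<in> ob C0" and B0: "B \<in> ob C0" using A B by (simp_all add: obX)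
  have PA: "PP A \<in> ob C0" and PB: "PP B \<in> ob C0" by (rule PP_ob0[OF A0], rule PP_ob0[OF B0])
  have fX: "f \<in> carrier (cross_hom G (carrier G) C0 \<alpha> A B)" using f by (simp add: homX)
  have c: "cmp XC0 (PP A) A (PP B) (cmp XC0 A B (PP B) (ee B) f) (ee' A) \<in> carrier (cross_hom G (carrier G) C0 \<alpha> (PP A) (PP B))"
    by (rule xsetup.cmp_closed[OF xs0 PA A0 PB xsetup.cmp_closed[OF xs0 A0 B0 PB ee_closed[OF B0] fX] ee'_closed[OF A0]])
  obtain t a where PAe: "PP A = (t, a)" "t \<in> T" "a \<in> ob (Af t)" "t \<in> Z" using PP_obD[OF A0] by (rule obD_cases)
  obtain t' b where PBe: "PP B = (t', b)" "t' \<in> T" "b \<in> ob (Af t')" "t' \<in> Z" using PP_obD[OF B0] by (rule obD_cases)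
  show "\<exists>d\<in>carrier (homm DD (PP A) (PP B)). fm JJ (PP A) (PP B) d =
          cmp XC0 (fo JJ (PP A)) A (fo JJ (PP B)) (cmp XC0 A B (fo JJ (PP B)) (ee B) f) (ee' A)"
    unfolding JJ_fo using full_gen[OF PAe(2) PBe(2) PAe(3) PBe(3)] c PAe(1) PBe(1) by simp
next
  fix X assume X: "X \<in> ob DD"
  show "PP (fo JJ X) = X" unfolding JJ_fo by (rule PP_J[OF X])
  show "ee (fo JJ X) = ide XC0 (fo JJ X)" unfolding JJ_fo by (rule ee_J[OF X])
qed

end

theorem lemma4p5:
  fixes R :: "('r, 'x) ring_scheme"
    and G :: "('g, 'y) monoid_scheme"
    and Z :: "'z set" and \<phi> :: "'g \<Rightarrow> 'z \<Rightarrow> 'z"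
    and Af :: "'z \<Rightarrow> ('o, 'r, 'm) lincat"
    and \<alpha> :: "'g \<Rightarrow> ('z \<times> 'o, 'm, 'z \<times> 'o, 'm) lfunctor"
    and T :: "'z set"
  assumes "cring R"
    and "group G"
    and "group_action G Z \<phi>"
    and "\<forall>z\<in>Z. lincat R (Af z)"
    and "lincat_action R G (coprod Z Af) \<alpha>"
    and "\<forall>g\<in>carrier G. \<forall>z\<in>Z. (\<forall>a\<in>ob (Af z). fst (fo (\<alpha> g) (z, a)) = \<phi> g z)
                              \<and> lin_iso R (Af z) (Af (\<phi> g z)) (restr \<alpha> z g)"
    and "T \<subseteq> Z"
    and "\<forall>z\<in>Z. \<exists>!t. t \<in> T \<and> t \<in> orbit G \<phi> z"
  shows "lincat_equiv R (cross G (carrier G) (coprod Z Af) \<alpha>)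
           (coprod T (\<lambda>z. cross G (stabilizer G \<phi> z) (Af z) (restr \<alpha> z)))"
  by (rule msetup.main[OF msetup.intro[OF assms]])

end
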